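(* Let $m\ge 0$ be an integer and let $\rho_{\mathrm{ord}}:\mathbf U\to\mathrm{End}_R(V^{\otimes m})$ be the representation of $\mathbf U$ on $V^{\otimes m}$. Then $\rho_{\mathrm{ord}}(\mathbf U)=\rho_{\mathrm{ord}}(\mathbf U')$.
   Context: $R$ is a commutative ring with $1$, $q\in R$ invertible, $n\ge1$. Let $U_q(\mathfrak{gl}_n)$ be the $\mathbb{Q}(q)$-algebra ($q$ an indeterminate) generated by $e_i,f_i$ ($1\le i\le n-1$) and $q^h$ ($h\in P^\vee=\bigoplus_{j=1}^n\mathbb Z h_j$) with the usual relations: $q^0=1$, $q^hq^{h'}=q^{h+h'}$, $q^he_iq^{-h}=q^{\alpha_i(h)}e_i$, $q^hf_iq^{-h}=q^{-\alpha_i(h)}f_i$, $e_if_j-f_je_i=\delta_{ij}\frac{K_i-K_i^{-1}}{q-q^{-1}}$ with $K_i=q^{h_i-h_{i+1}}$, and the quantum Serre relations; here $\varepsilon_j(h_k)=\delta_{jk}$, $\alpha_i=\varepsilon_i-\varepsilon_{i+1}$. Comultiplication: $\Delta(q^h)=q^h\otimes q^h$, $\Delta(e_i)=e_i\otimes K_i^{-1}+1\otimes e_i$, $\Delta(f_i)=f_i\otimes 1+K_i\otimes f_i$. With $[l]_q=\sum_{i=0}^{l-1}q^{2i-l+1}$, $e_i^{(l)}=e_i^l/[l]_q!$, $f_i^{(l)}=f_i^l/[l]_q!$, let $\mathbf U_{\mathbb Z}$ (resp. $\mathbf U'_{\mathbb Z}$) be the $\mathbb Z[q,q^{-1}]$-subalgebra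 generated by all $q^h$ (resp. all $K_i$) and all $e_i^{(l)},f_i^{(l)}$, and $\mathbf U=R\otimes\mathbf U_{\mathbb Z}$, $\mathbf U'=R\otimes\mathbf U'_{\mathbb Z}\subseteq\mathbf U$ (specializing $q\mapsto q$). $V=R^n$ with basis $v_1,\dots,v_n$ is the $\mathbf U$-module with $q^hv_j=q^{\varepsilon_j(h)}v_j$, $e_iv_{i+1}=v_i$, $e_iv_j=0$ ($j\ne i+1$), $f_iv_i=v_{i+1}$, $f_iv_j=0$ ($j\ne i$) (the $R$-form of the vector representation); $\mathbf U$ acts on $V^{\otimes m}$ via the comultiplication. *)

theory Defs
  imports Main
begin

text \<open>Basis of V^{tensor m}: words w = [j_1,...,j_m] with 1 <= j_k <= n,
  standing for v_{j_1} (x) ... (x) v_{j_m}.  Tensor position k is the list index k (0-based).\<close>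
definition words :: "nat \<Rightarrow> nat \<Rightarrow> nat list set" where
  "words n m = {w. length w = m \<and> set w \<subseteq> {1..n}}"

text \<open>R-linear endomorphisms of V^{tensor m}, as matrices: A u w is the coefficient of
  basis vector u in A(basis vector w).  Entries outside words n m are irrelevant (kept 0).\<close>
type_synonym 'a mat = "nat list \<Rightarrow> nat list \<Rightarrow> 'a"

definition mat_mult :: "nat \<Rightarrow> nat \<Rightarrow> 'a::comm_ring_1 mat \<Rightarrow> 'a mat \<Rightarrow> 'a mat" where
  "mat_mult n m A B = (\<lambda>u w. \<Sum>v\<in>words n m. A u v * B v w)"

definition mat_one :: "nat \<Rightarrow> nat \<Rightarrow> 'a::comm_ring_1 mat" where
  "mat_one n m = (\<lambda>u w. if u \<in> words n m \<and> u = w then 1 else 0)"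

inductive_set subalg :: "nat \<Rightarrow> nat \<Rightarrow> 'a::comm_ring_1 mat set \<Rightarrow> 'a mat set"
  for n m :: nat and G :: "'a mat set" where
  gen: "A \<in> G \<Longrightarrow> A \<in> subalg n m G"
| one: "mat_one n m \<in> subalg n m G"
| add: "A \<in> subalg n m G \<Longrightarrow> B \<in> subalg n m G \<Longrightarrow> (\<lambda>u w. A u w + B u w) \<in> subalg n m G"
| smult: "A \<in> subalg n m G \<Longrightarrow> (\<lambda>u w. r * A u w) \<in> subalg n m G"
| mult: "A \<in> subalg n m G \<Longrightarrow> B \<in> subalg n m G \<Longrightarrow> mat_mult n m A B \<in> subalg n m G"

definition qinv :: "'a::comm_ring_1 \<Rightarrow> 'a" where
  "qinv q = (SOME y. q * y = 1)"

definition qpow :: "'a::comm_ring_1 \<Rightarrow> int \<Rightarrow> 'a" where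
  "qpow q k = (if 0 \<le> k then q ^ nat k else qinv q ^ nat (- k))"

text \<open>Action of q^h, h = sum_j h(j) h_j (only h 1, ..., h n matter):
  q^h v_w = prod_k q^{eps_{w_k}(h)} v_w = prod_k q^{h(w_k)} v_w.\<close>
definition rho_qh :: "'a::comm_ring_1 \<Rightarrow> nat \<Rightarrow> nat \<Rightarrow> (nat \<Rightarrow> int) \<Rightarrow> 'a mat" where
  "rho_qh q n m h = (\<lambda>u w. if w \<in> words n m \<and> u = w then (\<Prod>k<m. qpow q (h (w ! k))) else 0)"

text \<open>h_i - h_{i+1}, so that K_i = q^{hK i}.\<close>
definition hK :: "nat \<Rightarrow> nat \<Rightarrow> int" where
  "hK i = (\<lambda>j. (if j = i then 1 else 0) - (if j = i + 1 then 1 else 0))"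

text \<open>Action of the divided power e_i^{(l)} on V^{tensor m} (via the iterated comultiplication
  Delta(e_i) = e_i (x) K_i^{-1} + 1 (x) e_i).\<close>
definition rho_E :: "'a::comm_ring_1 \<Rightarrow> nat \<Rightarrow> nat \<Rightarrow> nat \<Rightarrow> nat \<Rightarrow> 'a mat" where
  "rho_E q n m i l = (\<lambda>u w.
     if u \<in> words n m \<and> w \<in> words n m
        \<and> card {k. k < m \<and> u ! k \<noteq> w ! k} = l
        \<and> (\<forall>k<m. u ! k \<noteq> w ! k \<longrightarrow> w ! k = i + 1 \<and> u ! k = i)
     then qpow q (\<Sum>k\<in>{k. k < m \<and> u ! k \<noteq> w ! k}.
              int (card {p. k < p \<and> p < m \<and> u ! p = w ! p \<and> w ! p = i + 1})
            - int (card {p. k < p \<and> p < m \<and> u ! p = w ! p \<and> w ! p = i}))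
     else 0)"

text \<open>Action of the divided power f_i^{(l)} (via Delta(f_i) = f_i (x) 1 + K_i (x) f_i):
  sum over sets S of l positions k with w_k = i, replacing them by i+1, with coefficient
  q^{c(S)}, c(S) = sum_{k in S} (#{p < k, p not in S, w_p = i} - #{p < k, p not in S, w_p = i+1}).\<close>
definition rho_F :: "'a::comm_ring_1 \<Rightarrow> nat \<Rightarrow> nat \<Rightarrow> nat \<Rightarrow> nat \<Rightarrow> 'a mat" where
  "rho_F q n m i l = (\<lambda>u w.
     if u \<in> words n m \<and> w \<in> words n m
        \<and> card {k. k < m \<and> u ! k \<noteq> w ! k} = l
        \<and> (\<forall>k<m. u ! k \<noteq> w ! k \<longrightarrow> w ! k = i \<and> u ! k = i + 1)
     then qpow q (\<Sum>k\<in>{k. k < m \<and> u ! k \<noteq> w ! k}.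
              int (card {p. p < k \<and> u ! p = w ! p \<and> w ! p = i})
            - int (card {p. p < k \<and> u ! p = w ! p \<and> w ! p = i + 1}))
     else 0)"

definition gens_EF :: "'a::comm_ring_1 \<Rightarrow> nat \<Rightarrow> nat \<Rightarrow> 'a mat set" where
  "gens_EF q n m = {rho_E q n m i l | i l. 1 \<le> i \<and> i < n}
                 \<union> {rho_F q n m i l | i l. 1 \<le> i \<and> i < n}"

definition gens_U :: "'a::comm_ring_1 \<Rightarrow> nat \<Rightarrow> nat \<Rightarrow> 'a mat set" where
  "gens_U q n m = range (rho_qh q n m) \<union> gens_EF q n m"

definition gens_U' :: "'a::comm_ring_1 \<Rightarrow> nat \<Rightarrow> nat \<Rightarrow> 'a mat set" where
  "gens_U' q n m = {rho_qh q n m (hK i) | i. 1 \<le> i \<and> i < n}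
                 \<union> {rho_qh q n m (- hK i) | i. 1 \<le> i \<and> i < n}
                 \<union> gens_EF q n m"

text \<open>rho_ord(U) and rho_ord(U'): R-subalgebras of End_R(V^{tensor m}) generated by the images
  of the generators (U = R (x) U_Z is spanned over R by monomials in its generators).\<close>
definition rho_U :: "'a::comm_ring_1 \<Rightarrow> nat \<Rightarrow> nat \<Rightarrow> 'a mat set" where
  "rho_U q n m = subalg n m (gens_U q n m)"

definition rho_U' :: "'a::comm_ring_1 \<Rightarrow> nat \<Rightarrow> nat \<Rightarrow> 'a mat set" where
  "rho_U' q n m = subalg n m (gens_U' q n m)"

end

theory Submission
  imports Defs
begin

lemma qinv_mult: assumes "(q::'a::comm_ring_1) dvd 1" shows "q * qinv q = 1"
proof -
  from assms obtain y where "1 = q * y" by (auto simp: dvd_def)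
  hence "\<exists>y. q * y = 1" by metis
  thus ?thesis unfolding qinv_def by (rule someI_ex)
qed

lemma qpow_0[simp]: "qpow q 0 = 1" by (simp add: qpow_def)

lemma qpow_Suc: assumes "(q::'a::comm_ring_1) dvd 1" shows "qpow q (k+1) = q * qpow q k"
proof (cases "0 \<le> k")
  case True
  then have "nat (k+1) = Suc (nat k)" by simp
  then show ?thesis using True by (simp add: qpow_def)
next
  case False
  then have a: "nat (-k) = Suc (nat (-(k+1)))" by simp
  have "qpow q k = qinv q * qinv q ^ nat (-(k+1))" using False a by (simp add: qpow_def)
  moreover have "qpow q (k+1) = qinv q ^ nat (-(k+1))" using False by (simp add: qpow_def)
  ultimately show ?thesis using qinv_mult[OF assms] by (simp add: mult.assoc[symmetric])
qed

lemma qpow_add: assumes "(q::'a::comm_ring_1) dvd 1" shows "qpow q (a+b) = qpow q a * qpow q b"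
proof (induction b rule: int_induct[where k=0])
  case base then show ?case by simp
next
  case (step1 i)
  have "qpow q (a + (i+1)) = q * qpow q (a+i)" using qpow_Suc[OF assms, of "a+i"] by (simp add: add.assoc)
  also have "\<dots> = qpow q a * (q * qpow q i)" using step1 by (simp add: ac_simps)
  also have "\<dots> = qpow q a * qpow q (i+1)" using qpow_Suc[OF assms, of i] by simp
  finally show ?case .
next
  case (step2 i)
  have h1: "qpow q (a+i) = q * qpow q (a + (i - 1))" using qpow_Suc[OF assms, of "a+(i-1)"] by (simp add: algebra_simps)
  have h2: "qpow q i = q * qpow q (i - 1)" using qpow_Suc[OF assms, of "i-1"] by simp
  have "q * qpow q (a + (i - 1)) = q * (qpow q a * qpow q (i - 1))"
    using step2 h1 h2 by (simp add: ac_simps)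
  hence "qinv q * (q * qpow q (a + (i - 1))) = qinv q * (q * (qpow q a * qpow q (i - 1)))" by simp
  thus ?case using qinv_mult[OF assms] by (simp add: mult.assoc[symmetric] mult.commute[of "qinv q"])
qed

lemma qpow_1: "qpow q 1 = q" by (simp add: qpow_def)

lemma qcomb: assumes "(q::'a::comm_ring_1) dvd 1"
  shows "qpow q a * qpow q b = qpow q (a+b)" "qpow q a * (qpow q b * c) = qpow q (a+b) * c"
  using qpow_add[OF assms] by (simp_all add: mult.assoc)

lemma qsplit: assumes "(q::'a::comm_ring_1) dvd 1"
  shows "qpow q (a + b) = qpow q a * qpow q b" "qpow q (a - b) = qpow q a * qpow q (-b)"
    "qpow q (-(a + b)) = qpow q (-a) * qpow q (-b)" "qpow q (-(a - b)) = qpow q (-a) * qpow q b"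
  using qpow_add[OF assms, of a b] qpow_add[OF assms, of a "-b"] qpow_add[OF assms, of "-a" "-b"] qpow_add[OF assms, of "-a" b]
  by simp_all

lemma qX: "e1 = e2 \<Longrightarrow> qpow q e1 * X = qpow q e2 * X" by simp

lemma qeq: "x = y \<Longrightarrow> qpow q x = qpow q y" by simp

lemma qpow_neg: assumes "(q::'a::comm_ring_1) dvd 1" shows "qpow q (-a) * qpow q a = 1"
  using qpow_add[OF assms, of "-a" a] by simp

fun gnat :: "'a::comm_ring_1 \<Rightarrow> nat \<Rightarrow> nat \<Rightarrow> 'a" where
  "gnat q N 0 = 1"
| "gnat q 0 (Suc k) = 0"
| "gnat q (Suc N) (Suc k) = qpow q (- int (Suc k)) * gnat q N (Suc k) + qpow q (int N - int k) * gnat q N k"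

lemma gnat_less: "N < k \<Longrightarrow> gnat q N k = 0"
proof (induction N arbitrary: k)
  case 0 then show ?case by (cases k) auto
next
  case (Suc N) then show ?case by (cases k) auto
qed

lemma gnat_diag[simp]: "gnat q N N = 1"
  by (induction N) (auto simp: gnat_less)

lemma gnat_P2:
  assumes u: "(q::'a::comm_ring_1) dvd 1"
  shows "gnat q (Suc N) (Suc k) = qpow q (int (Suc k)) * gnat q N (Suc k) + qpow q (int k - int N) * gnat q N k"
proof (induction N arbitrary: k)
  case 0
  then show ?case by (cases k) auto
next
  case (Suc N)
  note qa = qpow_add[OF u]
  have A: "gnat q (Suc (Suc N)) (Suc k) = qpow q (- int (Suc k)) * gnat q (Suc N) (Suc k) + qpow q (int (Suc N) - int k) * gnat q (Suc N) k"
    by simp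
  show ?case
  proof (cases k)
    case 0
    have "gnat q (Suc N) 0 = 1" by simp
    have "gnat q (Suc N) (Suc 0) = qpow q 1 * gnat q N (Suc 0) + qpow q (- int N)"
      using Suc.IH[of 0] by simp
    then have "gnat q (Suc (Suc N)) (Suc 0) = qpow q (-1) * (qpow q 1 * gnat q N (Suc 0) + qpow q (- int N)) + qpow q (int (Suc N))"
      using A 0 by simp
    also have "\<dots> = gnat q N (Suc 0) + qpow q (- int N - 1) + qpow q (int N + 1)"
      by (simp add: algebra_simps qcomb[OF u])
         (simp add: algebra_simps qcomb[OF u] qeq)
    finally have L: "gnat q (Suc (Suc N)) (Suc 0) = gnat q N (Suc 0) + qpow q (- int N - 1) + qpow q (int N + 1)" .
    have "gnat q (Suc N) (Suc 0) = qpow q (-1) * gnat q N (Suc 0) + qpow q (int N)" by simp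
    then have "qpow q 1 * gnat q (Suc N) (Suc 0) + qpow q (- int (Suc N)) = gnat q N (Suc 0) + qpow q (int N + 1) + qpow q (- int N - 1)"
      by (simp add: algebra_simps qcomb[OF u])
         (simp add: algebra_simps qcomb[OF u] qeq)
    then show ?thesis using L 0 by simp
  next
    case (Suc j)
    have I1: "gnat q (Suc N) (Suc (Suc j)) = qpow q (int (Suc (Suc j))) * gnat q N (Suc (Suc j)) + qpow q (int (Suc j) - int N) * gnat q N (Suc j)"
      using Suc.IH[of "Suc j"] .
    have I2: "gnat q (Suc N) (Suc j) = qpow q (int (Suc j)) * gnat q N (Suc j) + qpow q (int j - int N) * gnat q N j"
      using Suc.IH[of j] .
    have D1: "gnat q (Suc N) (Suc (Suc j)) = qpow q (- int (Suc (Suc j))) * gnat q N (Suc (Suc j)) + qpow q (int N - int (Suc j)) * gnat q N (Suc j)" by simp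
    have D2: "gnat q (Suc N) (Suc j) = qpow q (- int (Suc j)) * gnat q N (Suc j) + qpow q (int N - int j) * gnat q N j" by simp
    define a where "a = gnat q N (Suc (Suc j))"
    define b where "b = gnat q N (Suc j)"
    define c where "c = gnat q N j"
    have L: "gnat q (Suc (Suc N)) (Suc k) = a + (qpow q (- int (Suc k)) * qpow q (int (Suc j) - int N) + qpow q (int (Suc N) - int k) * qpow q (int (Suc j))) * b + qpow q (int (Suc N) - int k) * qpow q (int j - int N) * c"
      using A I1 I2 Suc qa[of "- int (Suc k)" "int (Suc k)"] unfolding a_def b_def c_def
      by (simp add: algebra_simps)
    have R: "qpow q (int (Suc k)) * gnat q (Suc N) (Suc k) + qpow q (int k - int (Suc N)) * gnat q (Suc N) k
       = a + (qpow q (int (Suc k)) * qpow q (int N - int (Suc j)) + qpow q (int k - int (Suc N)) * qpow q (- int (Suc j))) * b + qpow q (int k - int (Suc N)) * qpow q (int N - int j) * c"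
      using D1 D2 Suc qa[of "int (Suc k)" "- int (Suc k)"] unfolding a_def b_def c_def
      by (simp add: algebra_simps)
    have e1: "qpow q (- int (Suc k)) * qpow q (int (Suc j) - int N) = qpow q (int k - int (Suc N))  * qpow q (- int (Suc j))"
      by (simp add: Suc qcomb[OF u], (rule qeq, simp)?)
    have e2: "qpow q (int (Suc N) - int k) * qpow q (int (Suc j)) = qpow q (int (Suc k)) * qpow q (int N - int (Suc j))"
      by (simp add: Suc qcomb[OF u], (rule qeq, simp)?)
    have e3: "qpow q (int (Suc N) - int k) * qpow q (int j - int N) = qpow q (int k - int (Suc N)) * qpow q (int N - int j)"
      by (simp add: Suc qcomb[OF u], (rule qeq, simp)?)
    show ?thesis using L R e1 e2 e3 by (simp add: algebra_simps)
  qed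
qed

definition gauss :: "'a::comm_ring_1 \<Rightarrow> int \<Rightarrow> nat \<Rightarrow> 'a" where
  "gauss q x t = (if 0 \<le> x then gnat q (nat x) t else (-1)^t * gnat q (nat (int t - x - 1)) t)"

lemma gauss_0[simp]: "gauss q x 0 = 1" by (simp add: gauss_def)

lemma gauss_zero: "0 \<le> x \<Longrightarrow> x < int t \<Longrightarrow> gauss q x t = 0"
  by (simp add: gauss_def gnat_less nat_less_iff)

lemma gauss_diag: "gauss q (int t) t = 1" by (simp add: gauss_def)

lemma gauss_m1: "gauss q (-1) t = (-1)^t" by (simp add: gauss_def)

lemma gauss_pascal:
  assumes u: "(q::'a::comm_ring_1) dvd 1"
  shows "gauss q x (Suc k) = qpow q (- int (Suc k)) * gauss q (x - 1) (Suc k) + qpow q (x - int (Suc k)) * gauss q (x - 1) k"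
proof -
  consider "x \<ge> 1" | "x = 0" | "x < 0" by linarith
  then show ?thesis
  proof cases
    case 1
    define N where "N = nat (x - 1)"
    have N: "x = int (Suc N)" using 1 by (simp add: N_def)
    have g1: "gauss q x j = gnat q (Suc N) j" for j using N by (simp add: gauss_def del: of_nat_Suc)
    have g2: "gauss q (x - 1) j = gnat q N j" for j using N by (simp add: gauss_def)
    show ?thesis unfolding g1 g2 using N by simp
  next
    case 2
    have a: "nat (int (Suc k) - (-1) - 1) = Suc k" by simp
    have b: "nat (int k - (-1) - 1) = k" by simp
    have c: "nat (1 + int k) = Suc k" by simp
    show ?thesis using 2 by (simp add: gauss_def qcomb[OF u] c)
  next
    case 3
    define N where "N = nat (int k - x)"
    have N1: "nat (int (Suc k) - x - 1) = N" using 3 by (simp add: N_def)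
    have N2: "nat (int (Suc k) - (x - 1) - 1) = Suc N" using 3 by (simp add: N_def)
    have N3: "nat (int k - (x - 1) - 1) = N" using 3 by (simp add: N_def)
    have xN: "x = int k - int N" using 3 by (simp add: N_def)
    have P: "gnat q (Suc N) (Suc k) = qpow q (int (Suc k)) * gnat q N (Suc k) + qpow q (int k - int N) * gnat q N k"
      using gnat_P2[OF u] .
    have "qpow q (- int (Suc k)) * gnat q (Suc N) (Suc k) = gnat q N (Suc k) + qpow q (x - int (Suc k)) * gnat q N k"
      unfolding P xN by (simp add: algebra_simps qcomb[OF u], (rule qeq, simp)?)
    hence H: "qpow q (- int (Suc k)) * ((-1)^Suc k * gnat q (Suc N) (Suc k)) = (-1)^Suc k * (gnat q N (Suc k) + qpow q (x - int (Suc k)) * gnat q N k)"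
      by (metis mult.left_commute)
    have g: "gauss q x (Suc k) = (-1)^Suc k * gnat q N (Suc k)" "gauss q (x-1) (Suc k) = (-1)^Suc k * gnat q (Suc N) (Suc k)"
       "gauss q (x-1) k = (-1)^k * gnat q N k"
      using 3 N1 N2 N3 by (simp_all add: gauss_def del: power_Suc)
    show ?thesis unfolding g H by (simp add: algebra_simps)
  qed
qed

definition sg :: "nat \<Rightarrow> nat \<Rightarrow> int" where
  "sg i z = (if z = i then 1 else if z = i + 1 then -1 else 0)"

definition mu :: "nat \<Rightarrow> nat list \<Rightarrow> int" where
  "mu i w = sum_list (map (sg i) w)"

lemma mu_snoc[simp]: "mu i (w @ [z]) = mu i w + sg i z" by (simp add: mu_def)
lemma mu_Nil[simp]: "mu i [] = 0" by (simp add: mu_def)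

lemma words_Suc_mem: "u @ [x] \<in> words n (Suc m) \<longleftrightarrow> u \<in> words n m \<and> x \<in> {1..n}"
  by (auto simp: words_def)

lemma words_length: "u \<in> words n m \<Longrightarrow> length u = m" by (simp add: words_def)

lemma words_Suc_cases:
  assumes "w \<in> words n (Suc m)"
  obtains u x where "w = u @ [x]" "u \<in> words n m" "x \<in> {1..n}"
proof -
  have "w \<noteq> []" using assms by (auto simp: words_def)
  then obtain u x where w: "w = u @ [x]" by (metis rev_exhaust)
  then show ?thesis using that assms words_Suc_mem by blast
qed

lemma words_Suc: "words n (Suc m) = (\<lambda>(v,z). v @ [z]) ` (words n m \<times> {1..n})"
proof
  show "words n (Suc m) \<subseteq> (\<lambda>(v,z). v @ [z]) ` (words n m \<times> {1..n})"
  proof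
    fix w assume "w \<in> words n (Suc m)"
    then obtain u x where "w = u @ [x]" "u \<in> words n m" "x \<in> {1..n}" by (rule words_Suc_cases)
    then show "w \<in> (\<lambda>(v,z). v @ [z]) ` (words n m \<times> {1..n})" by force
  qed
  show "(\<lambda>(v,z). v @ [z]) ` (words n m \<times> {1..n}) \<subseteq> words n (Suc m)"
    using words_Suc_mem by auto
qed

lemma finite_words: "finite (words n m)"
proof (induction m)
  case 0
  have "words n 0 = {[]}" by (auto simp: words_def)
  then show ?case by simp
next
  case (Suc m) then show ?case by (simp add: words_Suc)
qed

lemma mat_mult_Suc:
  "mat_mult n (Suc m) A B u w = (\<Sum>v\<in>words n m. \<Sum>z\<in>{1..n}. A u (v @ [z]) * B (v @ [z]) w)"
proof -
  have inj: "inj_on (\<lambda>(v,z). v @ [z]) (words n m \<times> {1..n})" by (auto simp: inj_on_def)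
  have "mat_mult n (Suc m) A B u w = (\<Sum>p\<in>words n m \<times> {1..n}. A u (fst p @ [snd p]) * B (fst p @ [snd p]) w)"
    unfolding mat_mult_def words_Suc by (rule sum.reindex_cong[OF inj refl]) (auto simp: case_prod_unfold)
  also have "\<dots> = (\<Sum>v\<in>words n m. \<Sum>z\<in>{1..n}. A u (v @ [z]) * B (v @ [z]) w)"
    by (simp only: sum.cartesian_product) (simp add: case_prod_unfold)
  finally show ?thesis .
qed

lemma card_split_gt:
  "card {p. k < p \<and> p < Suc m \<and> Q p} = card {p. k < p \<and> p < m \<and> Q p} + (if k < m \<and> Q m then 1 else 0)"
proof -
  have e: "{p. k < p \<and> p < Suc m \<and> Q p} = {p. k < p \<and> p < m \<and> Q p} \<union> (if k < m \<and> Q m then {m} else {})"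
    by (auto simp: less_Suc_eq)
  show ?thesis unfolding e by (subst card_Un_disjoint) auto
qed

lemma card_split_lt:
  "card {p. p < Suc m \<and> Q p} = card {p. p < m \<and> Q p} + (if Q m then 1 else 0)"
  using card_split_gt[of 0 m Q] card_split_gt[of 0 "Suc m" Q]
proof -
  have e: "{p. p < Suc m \<and> Q p} = {p. p < m \<and> Q p} \<union> (if Q m then {m} else {})"
    by (auto simp: less_Suc_eq)
  show ?thesis unfolding e by (subst card_Un_disjoint) auto
qed

lemma set_app_gt: "length u = m \<Longrightarrow> length v = m \<Longrightarrow>
  {p. k < p \<and> p < m \<and> (u@[x])!p = (v@[z])!p \<and> (v@[z])!p = c} = {p. k < p \<and> p < m \<and> u!p = v!p \<and> v!p = c}"
  by (auto simp: nth_append)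

lemma set_app_lt: "length u = m \<Longrightarrow> length v = m \<Longrightarrow> k \<le> m \<Longrightarrow>
  {p. p < k \<and> (u@[x])!p = (v@[z])!p \<and> (v@[z])!p = c} = {p. p < k \<and> u!p = v!p \<and> v!p = c}"
  by (auto simp: nth_append)

lemma rho_E_peel:
  assumes u: "(q::'a::comm_ring_1) dvd 1" and uw: "u \<in> words n m" "v \<in> words n m" "x \<in> {1..n}" "z \<in> {1..n}"
  shows "rho_E q n (Suc m) i l (u@[x]) (v@[z]) =
    (if x = z then qpow q (- int l * sg i z) * rho_E q n m i l u v
     else if z = i+1 \<and> x = i \<and> 0 < l then rho_E q n m i (l-1) u v else 0)"
proof -
  have lu: "length u = m" and lv: "length v = m" using uw by (auto simp: words_def)
  have mem: "u@[x] \<in> words n (Suc m)" "v@[z] \<in> words n (Suc m)" using uw words_Suc_mem by blast+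
  let ?U = "u@[x]" and ?V = "v@[z]"
  define S where "S = {k. k < m \<and> u!k \<noteq> v!k}"
  define S' where "S' = {k. k < Suc m \<and> ?U!k \<noteq> ?V!k}"
  have finS: "finite S" unfolding S_def by simp
  have emp: "{p. m < p \<and> p < m \<and> Q p} = {}" for Q by auto
  define C where "C = (\<forall>k<m. u!k \<noteq> v!k \<longrightarrow> v!k = i+1 \<and> u!k = i)"
  define C' where "C' = (\<forall>k<Suc m. ?U!k \<noteq> ?V!k \<longrightarrow> ?V!k = i+1 \<and> ?U!k = i)"
  define ex where "ex = (\<Sum>k\<in>S. int (card {p. k < p \<and> p < m \<and> u!p = v!p \<and> v!p = i + 1})
            - int (card {p. k < p \<and> p < m \<and> u!p = v!p \<and> v!p = i}))"
  define ex' where "ex' = (\<Sum>k\<in>S'. int (card {p. k < p \<and> p < Suc m \<and> ?U!p = ?V!p \<and> ?V!p = i + 1})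
            - int (card {p. k < p \<and> p < Suc m \<and> ?U!p = ?V!p \<and> ?V!p = i}))"
  have L: "rho_E q n (Suc m) i l ?U ?V = (if card S' = l \<and> C' then qpow q ex' else 0)"
    using mem unfolding rho_E_def S'_def C'_def ex'_def by simp
  have R: "rho_E q n m i j u v = (if card S = j \<and> C then qpow q ex else 0)" for j
    using uw unfolding rho_E_def S_def C_def ex_def by simp
  have split: "card {p. k < p \<and> p < Suc m \<and> ?U!p = ?V!p \<and> ?V!p = c}
      = card {p. k < p \<and> p < m \<and> u!p = v!p \<and> v!p = c} + (if k < m \<and> x = z \<and> z = c then 1 else 0)" for k c
    using card_split_gt[of k m "\<lambda>p. ?U!p = ?V!p \<and> ?V!p = c"] set_app_gt[OF lu lv, of k x z c] lu lv
    by (simp add: nth_append)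
  show ?thesis
  proof (cases "x = z")
    case True
    have SS: "S' = S" unfolding S_def S'_def using True lu lv by (auto simp: nth_append less_Suc_eq)
    have CC: "C' = C" unfolding C_def C'_def using True lu lv by (auto simp: nth_append less_Suc_eq)
    have "ex' = (\<Sum>k\<in>S. (int (card {p. k < p \<and> p < m \<and> u!p = v!p \<and> v!p = i + 1})
            - int (card {p. k < p \<and> p < m \<and> u!p = v!p \<and> v!p = i})) + (- sg i z))"
      unfolding ex'_def SS
    proof (rule sum.cong[OF refl])
      fix k assume "k \<in> S" then have "k < m" by (simp add: S_def)
      then show "int (card {p. k < p \<and> p < Suc m \<and> ?U!p = ?V!p \<and> ?V!p = i + 1})
            - int (card {p. k < p \<and> p < Suc m \<and> ?U!p = ?V!p \<and> ?V!p = i}) =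
            (int (card {p. k < p \<and> p < m \<and> u!p = v!p \<and> v!p = i + 1})
            - int (card {p. k < p \<and> p < m \<and> u!p = v!p \<and> v!p = i})) + (- sg i z)"
        unfolding split using True by (auto simp: sg_def)
    qed
    also have "\<dots> = ex - int (card S) * sg i z" unfolding ex_def by (simp add: sum_subtractf)
    finally have E: "ex' = ex - int (card S) * sg i z" .
    show ?thesis
    proof (cases "card S = l \<and> C")
      case c: True
      have "ex' = - int l * sg i z + ex" using c E by simp
      hence "qpow q ex' = qpow q (- int l * sg i z) * qpow q ex" using qpow_add[OF u, of "- int l * sg i z" ex]
        by simp
      then show ?thesis unfolding L R SS CC using True c by simp
    next
      case False
      then show ?thesis unfolding L R SS CC using True by auto
    qed
  next
    case False
    have SS: "S' = insert m S" unfolding S_def S'_def using False lu lv by (auto simp: nth_append less_Suc_eq)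
    have mS: "m \<notin> S" by (simp add: S_def)
    have cS: "card S' = Suc (card S)" unfolding SS using finS mS by simp
    show ?thesis
    proof (cases "z = i+1 \<and> x = i")
      case zx: True
      have CC: "C' = C" unfolding C_def C'_def using zx lu lv by (auto simp: nth_append less_Suc_eq)
      have "ex' = (\<Sum>k\<in>S'. int (card {p. k < p \<and> p < Suc m \<and> ?U!p = ?V!p \<and> ?V!p = i + 1})
            - int (card {p. k < p \<and> p < Suc m \<and> ?U!p = ?V!p \<and> ?V!p = i}))" by (simp add: ex'_def)
      also have "\<dots> = (\<Sum>k\<in>S. int (card {p. k < p \<and> p < Suc m \<and> ?U!p = ?V!p \<and> ?V!p = i + 1})
            - int (card {p. k < p \<and> p < Suc m \<and> ?U!p = ?V!p \<and> ?V!p = i}))"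
        unfolding SS using finS mS by (simp add: split emp)
      also have "\<dots> = ex" unfolding ex_def
      proof (rule sum.cong[OF refl])
        fix k assume "k \<in> S"
        show "int (card {p. k < p \<and> p < Suc m \<and> ?U!p = ?V!p \<and> ?V!p = i + 1})
            - int (card {p. k < p \<and> p < Suc m \<and> ?U!p = ?V!p \<and> ?V!p = i}) =
            int (card {p. k < p \<and> p < m \<and> u!p = v!p \<and> v!p = i + 1})
            - int (card {p. k < p \<and> p < m \<and> u!p = v!p \<and> v!p = i})"
          unfolding split using False by simp
      qed
      finally have E: "ex' = ex" by simp
      show ?thesis
      proof (cases "0 < l")
        case True
        have "(card S' = l) = (card S = l - 1)" using cS True by auto
        then have "rho_E q n (Suc m) i l ?U ?V = rho_E q n m i (l-1) u v" unfolding L R CC E by simp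
        then show ?thesis using zx \<open>x \<noteq> z\<close> True by simp
      next
        case l0: False
        then show ?thesis unfolding L using zx False cS by simp
      qed
    next
      case zx: False
      have "\<not> C'"
      proof
        assume C' then have "?U!m \<noteq> ?V!m \<longrightarrow> ?V!m = i+1 \<and> ?U!m = i" unfolding C'_def by blast
        moreover have "?U!m = x" "?V!m = z" using lu lv by (simp_all add: nth_append)
        ultimately show False using \<open>x \<noteq> z\<close> zx by simp
      qed
      then have "rho_E q n (Suc m) i l ?U ?V = 0" unfolding L by simp
      then show ?thesis using zx \<open>x \<noteq> z\<close> by auto
    qed
  qed
qed

definition cF :: "nat \<Rightarrow> nat list \<Rightarrow> nat list \<Rightarrow> int" where
  "cF i u v = int (card {p. p < length v \<and> u!p = v!p \<and> v!p = i}) - int (card {p. p < length v \<and> u!p = v!p \<and> v!p = i + 1})"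

lemma rho_F_peel:
  assumes u: "(q::'a::comm_ring_1) dvd 1" and uw: "u \<in> words n m" "v \<in> words n m" "x \<in> {1..n}" "z \<in> {1..n}"
  shows "rho_F q n (Suc m) i l (u@[x]) (v@[z]) =
    (if x = z then rho_F q n m i l u v
     else if z = i \<and> x = i+1 \<and> 0 < l then qpow q (cF i u v) * rho_F q n m i (l-1) u v else 0)"
proof -
  have lu: "length u = m" and lv: "length v = m" using uw by (auto simp: words_def)
  have mem: "u@[x] \<in> words n (Suc m)" "v@[z] \<in> words n (Suc m)" using uw words_Suc_mem by blast+
  let ?U = "u@[x]" and ?V = "v@[z]"
  define S where "S = {k. k < m \<and> u!k \<noteq> v!k}"
  define S' where "S' = {k. k < Suc m \<and> ?U!k \<noteq> ?V!k}"
  have finS: "finite S" unfolding S_def by simp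
  define C where "C = (\<forall>k<m. u!k \<noteq> v!k \<longrightarrow> v!k = i \<and> u!k = i+1)"
  define C' where "C' = (\<forall>k<Suc m. ?U!k \<noteq> ?V!k \<longrightarrow> ?V!k = i \<and> ?U!k = i+1)"
  define ex where "ex = (\<Sum>k\<in>S. int (card {p. p < k \<and> u!p = v!p \<and> v!p = i})
            - int (card {p. p < k \<and> u!p = v!p \<and> v!p = i + 1}))"
  define ex' where "ex' = (\<Sum>k\<in>S'. int (card {p. p < k \<and> ?U!p = ?V!p \<and> ?V!p = i})
            - int (card {p. p < k \<and> ?U!p = ?V!p \<and> ?V!p = i + 1}))"
  have L: "rho_F q n (Suc m) i l ?U ?V = (if card S' = l \<and> C' then qpow q ex' else 0)"
    using mem unfolding rho_F_def S'_def C'_def ex'_def by simp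
  have R: "rho_F q n m i j u v = (if card S = j \<and> C then qpow q ex else 0)" for j
    using uw unfolding rho_F_def S_def C_def ex_def by simp
  have trm: "int (card {p. p < k \<and> ?U!p = ?V!p \<and> ?V!p = i})
            - int (card {p. p < k \<and> ?U!p = ?V!p \<and> ?V!p = i + 1}) =
            int (card {p. p < k \<and> u!p = v!p \<and> v!p = i})
            - int (card {p. p < k \<and> u!p = v!p \<and> v!p = i + 1})" if "k \<le> m" for k
    using set_app_lt[OF lu lv that, of x z] by simp
  have exS: "(\<Sum>k\<in>S. int (card {p. p < k \<and> ?U!p = ?V!p \<and> ?V!p = i})
            - int (card {p. p < k \<and> ?U!p = ?V!p \<and> ?V!p = i + 1})) = ex"
    unfolding ex_def by (rule sum.cong[OF refl]) (rule trm, simp add: S_def)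
  show ?thesis
  proof (cases "x = z")
    case True
    have SS: "S' = S" unfolding S_def S'_def using True lu lv by (auto simp: nth_append less_Suc_eq)
    have CC: "C' = C" unfolding C_def C'_def using True lu lv by (auto simp: nth_append less_Suc_eq)
    have E: "ex' = ex" unfolding ex'_def SS exS ..
    show ?thesis unfolding L R SS CC E using True by simp
  next
    case False
    have SS: "S' = insert m S" unfolding S_def S'_def using False lu lv by (auto simp: nth_append less_Suc_eq)
    have mS: "m \<notin> S" by (simp add: S_def)
    have cS: "card S' = Suc (card S)" unfolding SS using finS mS by simp
    show ?thesis
    proof (cases "z = i \<and> x = i+1")
      case zx: True
      have CC: "C' = C" unfolding C_def C'_def using zx lu lv by (auto simp: nth_append less_Suc_eq)
      have "ex' = (int (card {p. p < m \<and> ?U!p = ?V!p \<and> ?V!p = i})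
            - int (card {p. p < m \<and> ?U!p = ?V!p \<and> ?V!p = i + 1})) + ex"
        unfolding ex'_def SS using finS mS exS by simp
      also have "\<dots> = cF i u v + ex" unfolding trm[OF order_refl] cF_def lv ..
      finally have E: "ex' = cF i u v + ex" .
      show ?thesis
      proof (cases "0 < l")
        case True
        have "(card S' = l) = (card S = l - 1)" using cS True by auto
        then have "rho_F q n (Suc m) i l ?U ?V = qpow q (cF i u v) * rho_F q n m i (l-1) u v"
          unfolding L R CC E by (simp add: qpow_add[OF u])
        then show ?thesis using zx \<open>x \<noteq> z\<close> True by simp
      next
        case l0: False
        then show ?thesis unfolding L using zx False cS by simp
      qed
    next
      case zx: False
      have "\<not> C'"
      proof
        assume C' then have "?U!m \<noteq> ?V!m \<longrightarrow> ?V!m = i \<and> ?U!m = i+1" unfolding C'_def by blast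
        moreover have "?U!m = x" "?V!m = z" using lu lv by (simp_all add: nth_append)
        ultimately show False using \<open>x \<noteq> z\<close> zx by simp
      qed
      then have "rho_F q n (Suc m) i l ?U ?V = 0" unfolding L by simp
      then show ?thesis using zx \<open>x \<noteq> z\<close> by auto
    qed
  qed
qed

lemma words_0: "words n 0 = {[]}" by (auto simp: words_def)

lemma rho_E_0: "rho_E q n 0 i l u v = (if u = [] \<and> v = [] \<and> l = 0 then 1 else 0)"
  by (auto simp: rho_E_def words_def)
lemma rho_F_0: "rho_F q n 0 i l u v = (if u = [] \<and> v = [] \<and> l = 0 then 1 else 0)"
  by (auto simp: rho_F_def words_def)

lemma rho_E_words: "rho_E q n m i l u v \<noteq> 0 \<Longrightarrow> u \<in> words n m \<and> v \<in> words n m"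
  by (simp add: rho_E_def split: if_splits)
lemma rho_F_words: "rho_F q n m i l u v \<noteq> 0 \<Longrightarrow> u \<in> words n m \<and> v \<in> words n m"
  by (simp add: rho_F_def split: if_splits)

lemma cF_snoc: "length u = length v \<Longrightarrow> cF i (u@[x]) (v@[z]) = cF i u v + (if x = z then sg i z else 0)"
proof -
  assume l: "length u = length v"
  let ?m = "length v"
  have A: "card {p. p < Suc ?m \<and> (u@[x])!p = (v@[z])!p \<and> (v@[z])!p = c} = card {p. p < ?m \<and> u!p = v!p \<and> v!p = c} + (if x = z \<and> z = c then 1 else 0)" for c
    using card_split_lt[of ?m "\<lambda>p. (u@[x])!p = (v@[z])!p \<and> (v@[z])!p = c"] set_app_lt[OF l refl order_refl, of x z c] l
    by (simp add: nth_append)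
  show ?thesis unfolding cF_def using A[of i] A[of "i+1"] by (simp add: sg_def)
qed

lemma cF_rho_F:
  assumes "(q::'a::comm_ring_1) dvd 1"
  shows "rho_F q n m i l u v \<noteq> 0 \<Longrightarrow> cF i u v = mu i v - int l"
proof (induction m arbitrary: l u v)
  case 0
  then show ?case by (auto simp: rho_F_0 cF_def split: if_splits)
next
  case (Suc m)
  from rho_F_words[OF Suc.prems] have "u \<in> words n (Suc m)" "v \<in> words n (Suc m)" by auto
  then obtain u' x v' z where uv: "u = u'@[x]" "u' \<in> words n m" "x \<in> {1..n}" "v = v'@[z]" "v' \<in> words n m" "z \<in> {1..n}"
    by (metis words_Suc_cases)
  have len: "length u' = length v'" using uv by (simp add: words_def)
  note P = rho_F_peel[OF assms uv(2) uv(5) uv(3) uv(6), of i l]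
  show ?case
  proof (cases "x = z")
    case True
    then have "rho_F q n m i l u' v' \<noteq> 0" using Suc.prems P uv by simp
    then show ?thesis using Suc.IH True uv len by (simp add: cF_snoc)
  next
    case False
    then have c: "z = i \<and> x = i+1 \<and> 0 < l" using Suc.prems P uv by (auto split: if_splits)
    then have "rho_F q n m i (l-1) u' v' \<noteq> 0" using Suc.prems P uv False by auto
    then have "cF i u' v' = mu i v' - int (l - 1)" using Suc.IH by blast
    then show ?thesis using False c uv len by (simp add: cF_snoc sg_def of_nat_diff)
  qed
qed

lemma mu_rho_E:
  assumes "(q::'a::comm_ring_1) dvd 1"
  shows "rho_E q n m i l u v \<noteq> 0 \<Longrightarrow> mu i u = mu i v + 2 * int l"
proof (induction m arbitrary: l u v)
  case 0
  then show ?case by (auto simp: rho_E_0 split: if_splits)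
next
  case (Suc m)
  from rho_E_words[OF Suc.prems] have "u \<in> words n (Suc m)" "v \<in> words n (Suc m)" by auto
  then obtain u' x v' z where uv: "u = u'@[x]" "u' \<in> words n m" "x \<in> {1..n}" "v = v'@[z]" "v' \<in> words n m" "z \<in> {1..n}"
    by (metis words_Suc_cases)
  note P = rho_E_peel[OF assms uv(2) uv(5) uv(3) uv(6), of i l]
  show ?case
  proof (cases "x = z")
    case True
    then have "rho_E q n m i l u' v' \<noteq> 0" using Suc.prems P uv by auto
    then show ?thesis using Suc.IH True uv by simp
  next
    case False
    then have c: "z = i+1 \<and> x = i \<and> 0 < l" using Suc.prems P uv by (auto split: if_splits)
    then have "rho_E q n m i (l-1) u' v' \<noteq> 0" using Suc.prems P uv False by auto
    then have "mu i u' = mu i v' + 2 * int (l - 1)" using Suc.IH by blast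
    then show ?thesis using False c uv by (simp add: sg_def of_nat_diff)
  qed
qed

lemma mu_rho_F:
  assumes "(q::'a::comm_ring_1) dvd 1"
  shows "rho_F q n m i l u v \<noteq> 0 \<Longrightarrow> mu i u = mu i v - 2 * int l"
proof (induction m arbitrary: l u v)
  case 0
  then show ?case by (auto simp: rho_F_0 split: if_splits)
next
  case (Suc m)
  from rho_F_words[OF Suc.prems] have "u \<in> words n (Suc m)" "v \<in> words n (Suc m)" by auto
  then obtain u' x v' z where uv: "u = u'@[x]" "u' \<in> words n m" "x \<in> {1..n}" "v = v'@[z]" "v' \<in> words n m" "z \<in> {1..n}"
    by (metis words_Suc_cases)
  note P = rho_F_peel[OF assms uv(2) uv(5) uv(3) uv(6), of i l]
  show ?case
  proof (cases "x = z")
    case True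
    then have "rho_F q n m i l u' v' \<noteq> 0" using Suc.prems P uv by auto
    then show ?thesis using Suc.IH True uv by simp
  next
    case False
    then have c: "z = i \<and> x = i+1 \<and> 0 < l" using Suc.prems P uv by (auto split: if_splits)
    then have "rho_F q n m i (l-1) u' v' \<noteq> 0" using Suc.prems P uv False by auto
    then have "mu i u' = mu i v' - 2 * int (l - 1)" using Suc.IH by blast
    then show ?thesis using False c uv by (simp add: sg_def of_nat_diff)
  qed
qed

lemma sum_two:
  assumes "finite Z" "y \<in> Z" "c \<in> Z" "c \<noteq> y"
  shows "(\<Sum>z\<in>Z. (if z = y then A else if z = c then B else 0)) = A + B"
proof -
  have "(\<Sum>z\<in>Z. (if z = y then A else if z = c then B else 0)) = (\<Sum>z\<in>Z. (if z = y then A else 0) + (if z = c then B else 0))"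
    using assms(4) by (intro sum.cong) auto
  also have "\<dots> = A + B" using assms by (simp add: sum.distrib)
  finally show ?thesis .
qed

lemma sum_one:
  assumes "finite Z" "y \<in> Z"
  shows "(\<Sum>z\<in>Z. (if z = y then A else 0)) = A"
  using assms by simp

lemma qcF_F:
  assumes u: "(q::'a::comm_ring_1) dvd 1"
  shows "qpow q (cF i u v) * rho_F q n m i l u v = qpow q (mu i v - int l) * rho_F q n m i l u v"
  using cF_rho_F[OF u, of n m i l u v] by (cases "rho_F q n m i l u v = 0") auto

lemma qcF_FE:
  assumes u: "(q::'a::comm_ring_1) dvd 1"
  shows "qpow q (cF i u v) * rho_F q n m i l u v * rho_E q n m i a v w = qpow q (mu i w + 2 * int a - int l) * rho_F q n m i l u v * rho_E q n m i a v w"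
proof (cases "rho_E q n m i a v w = 0")
  case False
  then have "mu i v = mu i w + 2 * int a" using mu_rho_E[OF u] by blast
  then show ?thesis using qcF_F[OF u, of i u v n m l] by simp
qed simp

lemma EF_inner:
  assumes u: "(q::'a::comm_ring_1) dvd 1" and i: "1 \<le> i" "i < n"
    and uw: "u \<in> words n m" "v \<in> words n m" "w \<in> words n m" "x \<in> {1..n}" "y \<in> {1..n}"
  shows "(\<Sum>z\<in>{1..n}. rho_E q n (Suc m) i a (u@[x]) (v@[z]) * rho_F q n (Suc m) i b (v@[z]) (w@[y])) =
    (if y = i then
       (if x = i then qpow q (- int a) * (rho_E q n m i a u v * rho_F q n m i b v w)
          + (if 0 < a \<and> 0 < b then qpow q (mu i w - int b + 1) * (rho_E q n m i (a-1) u v * rho_F q n m i (b-1) v w) else 0)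
        else if x = i+1 then (if 0 < b then qpow q (int a + mu i w - int b + 1) * (rho_E q n m i a u v * rho_F q n m i (b-1) v w) else 0)
        else 0)
     else if y = i+1 then
       (if x = i+1 then qpow q (int a) * (rho_E q n m i a u v * rho_F q n m i b v w)
        else if x = i then (if 0 < a then rho_E q n m i (a-1) u v * rho_F q n m i b v w else 0)
        else 0)
     else (if x = y then rho_E q n m i a u v * rho_F q n m i b v w else 0))"
proof -
  have zi: "i \<in> {1..n}" "i+1 \<in> {1..n}" using i by auto
  note EP = rho_E_peel[OF u uw(1) uw(2) uw(4)]
  note FP = rho_F_peel[OF u uw(2) uw(3) _ uw(5)]
  have F1: "rho_F q n (Suc m) i b (v@[z]) (w@[y]) = (if z = y then rho_F q n m i b v w else if z = i+1 then
      (if y = i \<and> 0 < b then qpow q (mu i w - int (b - 1)) * rho_F q n m i (b-1) v w else 0) else 0)" if "z \<in> {1..n}" for z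
    using FP[OF that, of i b] qcF_F[OF u, of i v w n m "b-1"] by auto
  have "(\<Sum>z\<in>{1..n}. rho_E q n (Suc m) i a (u@[x]) (v@[z]) * rho_F q n (Suc m) i b (v@[z]) (w@[y])) =
    (\<Sum>z\<in>{1..n}. (if z = y then rho_E q n (Suc m) i a (u@[x]) (v@[y]) * rho_F q n m i b v w else if z = i+1 then
      rho_E q n (Suc m) i a (u@[x]) (v@[i+1]) * (if y = i \<and> 0 < b then qpow q (mu i w - int (b - 1)) * rho_F q n m i (b-1) v w else 0) else 0))"
    by (intro sum.cong refl) (simp add: F1)
  also have "\<dots> = (if y = i+1 then rho_E q n (Suc m) i a (u@[x]) (v@[y]) * rho_F q n m i b v w else
      rho_E q n (Suc m) i a (u@[x]) (v@[y]) * rho_F q n m i b v w +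
      rho_E q n (Suc m) i a (u@[x]) (v@[i+1]) * (if y = i \<and> 0 < b then qpow q (mu i w - int (b - 1)) * rho_F q n m i (b-1) v w else 0))"
  proof (cases "y = i+1")
    case True
    have "(\<Sum>z\<in>{1..n}. (if z = y then rho_E q n (Suc m) i a (u@[x]) (v@[y]) * rho_F q n m i b v w else if z = i+1 then
      rho_E q n (Suc m) i a (u@[x]) (v@[i+1]) * (if y = i \<and> 0 < b then qpow q (mu i w - int (b - 1)) * rho_F q n m i (b-1) v w else 0) else 0))
      = (\<Sum>z\<in>{1..n}. (if z = y then rho_E q n (Suc m) i a (u@[x]) (v@[y]) * rho_F q n m i b v w else 0))"
      using True by (intro sum.cong refl) auto
    then show ?thesis using uw(5) True by simp
  next
    case False then show ?thesis using uw(5) zi by (subst sum_two) auto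
  qed
  also have "\<dots> = (if y = i then
       (if x = i then qpow q (- int a) * (rho_E q n m i a u v * rho_F q n m i b v w)
          + (if 0 < a \<and> 0 < b then qpow q (mu i w - int b + 1) * (rho_E q n m i (a-1) u v * rho_F q n m i (b-1) v w) else 0)
        else if x = i+1 then (if 0 < b then qpow q (int a + mu i w - int b + 1) * (rho_E q n m i a u v * rho_F q n m i (b-1) v w) else 0)
        else 0)
     else if y = i+1 then
       (if x = i+1 then qpow q (int a) * (rho_E q n m i a u v * rho_F q n m i b v w)
        else if x = i then (if 0 < a then rho_E q n m i (a-1) u v * rho_F q n m i b v w else 0)
        else 0)
     else (if x = y then rho_E q n m i a u v * rho_F q n m i b v w else 0))"
  proof -
    have e1: "rho_E q n (Suc m) i a (u@[x]) (v@[y]) = (if x = y then qpow q (- int a * sg i y) * rho_E q n m i a u v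
      else if y = i+1 \<and> x = i \<and> 0 < a then rho_E q n m i (a-1) u v else 0)" using EP[OF uw(5)] .
    have e2: "rho_E q n (Suc m) i a (u@[x]) (v@[i+1]) = (if x = i+1 then qpow q (int a) * rho_E q n m i a u v
      else if x = i \<and> 0 < a then rho_E q n m i (a-1) u v else 0)" using EP[OF zi(2), of i a] by (simp add: sg_def)
    show ?thesis unfolding e1 e2
      by (auto simp: sg_def algebra_simps qsplit[OF u] of_nat_diff)
  qed
  finally show ?thesis .
qed

lemma FE_inner:
  assumes u: "(q::'a::comm_ring_1) dvd 1" and i: "1 \<le> i" "i < n"
    and uw: "u \<in> words n m" "v \<in> words n m" "w \<in> words n m" "x \<in> {1..n}" "y \<in> {1..n}"
  shows "(\<Sum>z\<in>{1..n}. rho_F q n (Suc m) i b (u@[x]) (v@[z]) * rho_E q n (Suc m) i a (v@[z]) (w@[y])) =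
    (if y = i then
       (if x = i then qpow q (- int a) * (rho_F q n m i b u v * rho_E q n m i a v w)
        else if x = i+1 then (if 0 < b then qpow q (mu i w + int a - int b + 1) * (rho_F q n m i (b-1) u v * rho_E q n m i a v w) else 0)
        else 0)
     else if y = i+1 then
       (if x = i+1 then qpow q (int a) * (rho_F q n m i b u v * rho_E q n m i a v w)
          + (if 0 < a \<and> 0 < b then qpow q (mu i w + 2 * int a - int b - 1) * (rho_F q n m i (b-1) u v * rho_E q n m i (a-1) v w) else 0)
        else if x = i then (if 0 < a then rho_F q n m i b u v * rho_E q n m i (a-1) v w else 0)
        else 0)
     else (if x = y then rho_F q n m i b u v * rho_E q n m i a v w else 0))"
proof -
  have zi: "i \<in> {1..n}" "i+1 \<in> {1..n}" using i by auto
  note FP = rho_F_peel[OF u uw(1) uw(2) uw(4)]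
  note EP = rho_E_peel[OF u uw(2) uw(3) _ uw(5)]
  have E1: "rho_E q n (Suc m) i a (v@[z]) (w@[y]) = (if z = y then qpow q (- int a * sg i y) * rho_E q n m i a v w else if z = i then
      (if y = i+1 \<and> 0 < a then rho_E q n m i (a-1) v w else 0) else 0)" if "z \<in> {1..n}" for z
    using EP[OF that, of i a] by auto
  have "(\<Sum>z\<in>{1..n}. rho_F q n (Suc m) i b (u@[x]) (v@[z]) * rho_E q n (Suc m) i a (v@[z]) (w@[y])) =
    (\<Sum>z\<in>{1..n}. (if z = y then rho_F q n (Suc m) i b (u@[x]) (v@[y]) * (qpow q (- int a * sg i y) * rho_E q n m i a v w) else if z = i then
      rho_F q n (Suc m) i b (u@[x]) (v@[i]) * (if y = i+1 \<and> 0 < a then rho_E q n m i (a-1) v w else 0) else 0))"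
    by (intro sum.cong refl) (simp add: E1)
  also have "\<dots> = (if y = i then rho_F q n (Suc m) i b (u@[x]) (v@[y]) * (qpow q (- int a * sg i y) * rho_E q n m i a v w) else
      rho_F q n (Suc m) i b (u@[x]) (v@[y]) * (qpow q (- int a * sg i y) * rho_E q n m i a v w) +
      rho_F q n (Suc m) i b (u@[x]) (v@[i]) * (if y = i+1 \<and> 0 < a then rho_E q n m i (a-1) v w else 0))"
  proof (cases "y = i")
    case True
    have "(\<Sum>z\<in>{1..n}. (if z = y then rho_F q n (Suc m) i b (u@[x]) (v@[y]) * (qpow q (- int a * sg i y) * rho_E q n m i a v w) else if z = i then
      rho_F q n (Suc m) i b (u@[x]) (v@[i]) * (if y = i+1 \<and> 0 < a then rho_E q n m i (a-1) v w else 0) else 0))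
      = (\<Sum>z\<in>{1..n}. (if z = y then rho_F q n (Suc m) i b (u@[x]) (v@[y]) * (qpow q (- int a * sg i y) * rho_E q n m i a v w) else 0))"
      using True by (intro sum.cong refl) auto
    then show ?thesis using uw(5) True by simp
  next
    case False then show ?thesis using uw(5) zi by (subst sum_two) auto
  qed
  also have "\<dots> = (if y = i then
       (if x = i then qpow q (- int a) * (rho_F q n m i b u v * rho_E q n m i a v w)
        else if x = i+1 then (if 0 < b then qpow q (mu i w + int a - int b + 1) * (rho_F q n m i (b-1) u v * rho_E q n m i a v w) else 0)
        else 0)
     else if y = i+1 then
       (if x = i+1 then qpow q (int a) * (rho_F q n m i b u v * rho_E q n m i a v w)
          + (if 0 < a \<and> 0 < b then qpow q (mu i w + 2 * int a - int b - 1) * (rho_F q n m i (b-1) u v * rho_E q n m i (a-1) v w) else 0)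
        else if x = i then (if 0 < a then rho_F q n m i b u v * rho_E q n m i (a-1) v w else 0)
        else 0)
     else (if x = y then rho_F q n m i b u v * rho_E q n m i a v w else 0))"
  proof -
    have e1: "rho_F q n (Suc m) i b (u@[x]) (v@[y]) = (if x = y then rho_F q n m i b u v
      else if y = i \<and> x = i+1 \<and> 0 < b then qpow q (cF i u v) * rho_F q n m i (b-1) u v else 0)" using FP[OF uw(5)] .
    have e2: "rho_F q n (Suc m) i b (u@[x]) (v@[i]) = (if x = i then rho_F q n m i b u v
      else if x = i+1 \<and> 0 < b then qpow q (cF i u v) * rho_F q n m i (b-1) u v else 0)" using FP[OF zi(1), of i b] by simp
    have c1: "qpow q (cF i u v) * rho_F q n m i (b-1) u v = qpow q (mu i v - int (b-1)) * rho_F q n m i (b-1) u v"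
      using qcF_F[OF u] .
    have qm: "qpow q e1 * (qpow q e2 * X) = qpow q e3 * X" if "e1 + e2 = e3" for e1 e2 e3 X
      using qcomb(2)[OF u] that by simp
    have ne: "i \<noteq> i + 1" by simp
    consider "y = i" | "y = i+1" | "y \<noteq> i" "y \<noteq> i+1" by blast
    then show ?thesis
    proof cases
      case 1
      have "x = i \<or> x = i+1 \<or> (x \<noteq> i \<and> x \<noteq> i+1)" by blast
      moreover
      { assume x: "x = i+1" "0 < b"
        have "qpow q (cF i u v) * rho_F q n m i (b - 1) u v * (qpow q (- int a) * rho_E q n m i a v w)
            = qpow q (- int a) * (qpow q (cF i u v) * rho_F q n m i (b - 1) u v * rho_E q n m i a v w)" by (simp add: ac_simps)
        also have "\<dots> = qpow q (- int a) * (qpow q (mu i w + 2 * int a - int (b-1)) * (rho_F q n m i (b - 1) u v * rho_E q n m i a v w))"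
          unfolding qcF_FE[OF u] by (simp add: ac_simps)
        also have "\<dots> = qpow q (mu i w + int a - int b + 1) * (rho_F q n m i (b - 1) u v * rho_E q n m i a v w)"
          using x by (intro qm) (simp add: of_nat_diff)
        finally have "qpow q (cF i u v) * rho_F q n m i (b - 1) u v * (qpow q (- int a) * rho_E q n m i a v w)
            = qpow q (mu i w + int a - int b + 1) * (rho_F q n m i (b - 1) u v * rho_E q n m i a v w)" . }
      ultimately show ?thesis unfolding 1 e2 by (auto simp: sg_def ac_simps)
    next
      case 2
      have e3: "rho_F q n (Suc m) i b (u@[x]) (v@[y]) = (if x = i+1 then rho_F q n m i b u v else 0)"
        unfolding e1 using 2 by auto
      have "x = i \<or> x = i+1 \<or> (x \<noteq> i \<and> x \<noteq> i+1)" by blast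
      moreover
      { assume x: "x = i+1" "0 < b" "0 < a"
        have "qpow q (cF i u v) * rho_F q n m i (b - 1) u v * rho_E q n m i (a-1) v w
            = qpow q (mu i w + 2 * int a - int b - 1) * (rho_F q n m i (b - 1) u v * rho_E q n m i (a-1) v w)"
          using x by (subst qcF_FE[OF u]) (simp only: mult.assoc, intro qX, simp add: of_nat_diff) }
      ultimately show ?thesis using 2 unfolding e2 e3 by (auto simp: sg_def ac_simps)
    next
      case 3
      have e3: "rho_F q n (Suc m) i b (u@[x]) (v@[y]) = (if x = y then rho_F q n m i b u v else 0)"
        unfolding e1 using 3 by auto
      show ?thesis using 3 unfolding e3 by (simp add: sg_def)
    qed
  qed
  finally show ?thesis .
qed

definition EFm where "EFm q n m i a b = mat_mult n m (rho_E q n m i a) (rho_F q n m i b)"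
definition FEm where "FEm q n m i b a = mat_mult n m (rho_F q n m i b) (rho_E q n m i a)"

lemma EF_peel:
  assumes u: "(q::'a::comm_ring_1) dvd 1" and i: "1 \<le> i" "i < n"
    and uw: "u \<in> words n m" "w \<in> words n m" "x \<in> {1..n}" "y \<in> {1..n}"
  shows "EFm q n (Suc m) i a b (u@[x]) (w@[y]) =
    (if y = i then
       (if x = i then qpow q (- int a) * EFm q n m i a b u w
          + (if 0 < a \<and> 0 < b then qpow q (mu i w - int b + 1) * EFm q n m i (a-1) (b-1) u w else 0)
        else if x = i+1 then (if 0 < b then qpow q (int a + mu i w - int b + 1) * EFm q n m i a (b-1) u w else 0)
        else 0)
     else if y = i+1 then
       (if x = i+1 then qpow q (int a) * EFm q n m i a b u w
        else if x = i then (if 0 < a then EFm q n m i (a-1) b u w else 0)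
        else 0)
     else (if x = y then EFm q n m i a b u w else 0))"
proof -
  have "EFm q n (Suc m) i a b (u@[x]) (w@[y]) = (\<Sum>v\<in>words n m.
    (if y = i then
       (if x = i then qpow q (- int a) * (rho_E q n m i a u v * rho_F q n m i b v w)
          + (if 0 < a \<and> 0 < b then qpow q (mu i w - int b + 1) * (rho_E q n m i (a-1) u v * rho_F q n m i (b-1) v w) else 0)
        else if x = i+1 then (if 0 < b then qpow q (int a + mu i w - int b + 1) * (rho_E q n m i a u v * rho_F q n m i (b-1) v w) else 0)
        else 0)
     else if y = i+1 then
       (if x = i+1 then qpow q (int a) * (rho_E q n m i a u v * rho_F q n m i b v w)
        else if x = i then (if 0 < a then rho_E q n m i (a-1) u v * rho_F q n m i b v w else 0)
        else 0)
     else (if x = y then rho_E q n m i a u v * rho_F q n m i b v w else 0)))"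
    unfolding EFm_def mat_mult_Suc
    by (rule sum.cong[OF refl], rule EF_inner[OF u i uw(1) _ uw(2) uw(3) uw(4)])
  also have "\<dots> = (if y = i then
       (if x = i then qpow q (- int a) * EFm q n m i a b u w
          + (if 0 < a \<and> 0 < b then qpow q (mu i w - int b + 1) * EFm q n m i (a-1) (b-1) u w else 0)
        else if x = i+1 then (if 0 < b then qpow q (int a + mu i w - int b + 1) * EFm q n m i a (b-1) u w else 0)
        else 0)
     else if y = i+1 then
       (if x = i+1 then qpow q (int a) * EFm q n m i a b u w
        else if x = i then (if 0 < a then EFm q n m i (a-1) b u w else 0)
        else 0)
     else (if x = y then EFm q n m i a b u w else 0))"
    unfolding EFm_def mat_mult_def
    by (simp add: sum.distrib sum_distrib_left)
  finally show ?thesis .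
qed

lemma FE_peel:
  assumes u: "(q::'a::comm_ring_1) dvd 1" and i: "1 \<le> i" "i < n"
    and uw: "u \<in> words n m" "w \<in> words n m" "x \<in> {1..n}" "y \<in> {1..n}"
  shows "FEm q n (Suc m) i b a (u@[x]) (w@[y]) =
    (if y = i then
       (if x = i then qpow q (- int a) * FEm q n m i b a u w
        else if x = i+1 then (if 0 < b then qpow q (mu i w + int a - int b + 1) * FEm q n m i (b-1) a u w else 0)
        else 0)
     else if y = i+1 then
       (if x = i+1 then qpow q (int a) * FEm q n m i b a u w
          + (if 0 < a \<and> 0 < b then qpow q (mu i w + 2 * int a - int b - 1) * FEm q n m i (b-1) (a-1) u w else 0)
        else if x = i then (if 0 < a then FEm q n m i b (a-1) u w else 0)
        else 0)
     else (if x = y then FEm q n m i b a u w else 0))"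
proof -
  have "FEm q n (Suc m) i b a (u@[x]) (w@[y]) = (\<Sum>v\<in>words n m.
    (if y = i then
       (if x = i then qpow q (- int a) * (rho_F q n m i b u v * rho_E q n m i a v w)
        else if x = i+1 then (if 0 < b then qpow q (mu i w + int a - int b + 1) * (rho_F q n m i (b-1) u v * rho_E q n m i a v w) else 0)
        else 0)
     else if y = i+1 then
       (if x = i+1 then qpow q (int a) * (rho_F q n m i b u v * rho_E q n m i a v w)
          + (if 0 < a \<and> 0 < b then qpow q (mu i w + 2 * int a - int b - 1) * (rho_F q n m i (b-1) u v * rho_E q n m i (a-1) v w) else 0)
        else if x = i then (if 0 < a then rho_F q n m i b u v * rho_E q n m i (a-1) v w else 0)
        else 0)
     else (if x = y then rho_F q n m i b u v * rho_E q n m i a v w else 0)))"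
    unfolding FEm_def mat_mult_Suc
    by (rule sum.cong[OF refl], rule FE_inner[OF u i uw(1) _ uw(2) uw(3) uw(4)])
  also have "\<dots> = (if y = i then
       (if x = i then qpow q (- int a) * FEm q n m i b a u w
        else if x = i+1 then (if 0 < b then qpow q (mu i w + int a - int b + 1) * FEm q n m i (b-1) a u w else 0)
        else 0)
     else if y = i+1 then
       (if x = i+1 then qpow q (int a) * FEm q n m i b a u w
          + (if 0 < a \<and> 0 < b then qpow q (mu i w + 2 * int a - int b - 1) * FEm q n m i (b-1) (a-1) u w else 0)
        else if x = i then (if 0 < a then FEm q n m i b (a-1) u w else 0)
        else 0)
     else (if x = y then FEm q n m i b a u w else 0))"
    unfolding FEm_def mat_mult_def
    by (simp add: sum.distrib sum_distrib_left)
  finally show ?thesis .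
qed

lemma sum_shift_if: "(\<Sum>t\<le>(M::nat). if t < M then d t else 0) = (\<Sum>t\<le>M. if 0 < t then d (t-1) else (0::'a::comm_ring_1))"
proof -
  have "(\<Sum>t\<le>M. if t < M then d t else 0) = (\<Sum>t<M. d t)"
  proof -
    have e: "{t\<in>{..M}. t < M} = {..<M}" by auto
    show ?thesis using sum.inter_filter[of "{..M}" d "\<lambda>t. t < M"] unfolding e by simp
  qed
  moreover have "(\<Sum>t\<le>M. if 0 < t then d (t-1) else 0) = (\<Sum>t<M. d t)"
  proof (cases M)
    case 0 then show ?thesis by simp
  next
    case (Suc k)
    then show ?thesis by (simp only: sum.atMost_Suc_shift lessThan_Suc_atMost) simp
  qed
  ultimately show ?thesis by simp
qed

lemma sum_restrict: "(\<Sum>t\<le>(K::nat). h t) = (\<Sum>t\<le>M. if t \<le> K then h t else (0::'a::comm_ring_1))" if "K \<le> M"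
proof -
  have e: "{t\<in>{..M}. t \<le> K} = {..K}" using that by auto
  show ?thesis using sum.inter_filter[of "{..M}" h "\<lambda>t. t \<le> K"] unfolding e by simp
qed

lemma pascal_mul:
  assumes u: "(q::'a::comm_ring_1) dvd 1" and t: "0 < t"
  shows "qpow q c * gauss q x t = qpow q (c - int t) * gauss q (x - 1) t + qpow q (c + x - int t) * gauss q (x - 1) (t - 1)"
proof -
  obtain k where k: "t = Suc k" using t by (cases t) auto
  have "qpow q c * gauss q x t = qpow q c * (qpow q (- int t) * gauss q (x - 1) t + qpow q (x - int t) * gauss q (x - 1) (t-1))"
    using gauss_pascal[OF u, of x k] k by simp
  also have "\<dots> = (qpow q c * qpow q (- int t)) * gauss q (x - 1) t + (qpow q c * qpow q (x - int t)) * gauss q (x - 1) (t - 1)"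
    by (simp add: algebra_simps)
  also have "\<dots> = qpow q (c - int t) * gauss q (x - 1) t + qpow q (c + x - int t) * gauss q (x - 1) (t - 1)"
    unfolding qcomb(1)[OF u] by (simp add: algebra_simps)
  finally show ?thesis .
qed

lemma LA:
  assumes u: "(q::'a::comm_ring_1) dvd 1"
  shows "qpow q (int a) * (\<Sum>t\<le>min a b. Fm (b-t) (a-t) * gauss q (mw + int a - int b) t) =
   (\<Sum>t\<le>min a b. (qpow q (int (a-t)) * Fm (b-t) (a-t) + (if 0 < a-t \<and> 0 < b-t then qpow q (mw + 2*int(a-t) - int(b-t) - 1) * Fm (b-t-1) (a-t-1) else 0)) * gauss q (mw + int a - int b - 1) t)"
proof -
  define M where "M = min a b"
  define X where "X = mw + int a - int b"
  define d where "d t = qpow q (mw + 2*int(a-t) - int(b-t) - 1) * Fm (b-t-1) (a-t-1) * gauss q (X - 1) t" for t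
  have "(\<Sum>t\<le>min a b. (qpow q (int (a-t)) * Fm (b-t) (a-t) + (if 0 < a-t \<and> 0 < b-t then qpow q (mw + 2*int(a-t) - int(b-t) - 1) * Fm (b-t-1) (a-t-1) else 0)) * gauss q (mw + int a - int b - 1) t)
     = (\<Sum>t\<le>M. qpow q (int (a-t)) * Fm (b-t) (a-t) * gauss q (X - 1) t + (if t < M then d t else 0))"
    unfolding M_def X_def d_def by (rule sum.cong) (auto simp: algebra_simps)
  also have "\<dots> = (\<Sum>t\<le>M. qpow q (int (a-t)) * Fm (b-t) (a-t) * gauss q (X - 1) t) + (\<Sum>t\<le>M. if t < M then d t else 0)"
    by (simp add: sum.distrib)
  also have "\<dots> = (\<Sum>t\<le>M. qpow q (int (a-t)) * Fm (b-t) (a-t) * gauss q (X - 1) t + (if 0 < t then d (t-1) else 0))"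
    unfolding sum_shift_if by (simp add: sum.distrib)
  also have "\<dots> = (\<Sum>t\<le>M. qpow q (int a) * (Fm (b-t) (a-t) * gauss q X t))"
  proof (rule sum.cong[OF refl])
    fix t assume t: "t \<in> {..M}"
    then have ta: "t \<le> a" "t \<le> b" by (auto simp: M_def)
    show "qpow q (int (a-t)) * Fm (b-t) (a-t) * gauss q (X - 1) t + (if 0 < t then d (t-1) else 0) = qpow q (int a) * (Fm (b-t) (a-t) * gauss q X t)"
    proof (cases "t = 0")
      case True then show ?thesis by simp
    next
      case False
      have e1: "b - (t - 1) - 1 = b - t" "a - (t - 1) - 1 = a - t" using False by auto
      have dd: "d (t-1) = qpow q (mw + 2 * int a - int b - int t) * Fm (b-t) (a-t) * gauss q (X - 1) (t-1)"
        unfolding d_def e1 using False ta by (intro arg_cong2[where f="(*)"] refl qX[THEN arg_cong[where f="\<lambda>z. z"]]) (auto intro!: qeq simp: of_nat_diff)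
      have P: "qpow q (int a) * gauss q X t = qpow q (int a - int t) * gauss q (X - 1) t + qpow q (mw + 2 * int a - int b - int t) * gauss q (X - 1) (t - 1)"
        using pascal_mul[OF u, of t "int a" X] False unfolding X_def by (simp add: algebra_simps)
      have "qpow q (int (a-t)) * Fm (b-t) (a-t) * gauss q (X - 1) t + (if 0 < t then d (t-1) else 0)
         = (qpow q (int a - int t) * gauss q (X - 1) t + qpow q (mw + 2 * int a - int b - int t) * gauss q (X - 1) (t - 1)) * Fm (b-t) (a-t)"
        unfolding dd using False ta by (simp add: algebra_simps of_nat_diff)
      also have "\<dots> = qpow q (int a) * (Fm (b-t) (a-t) * gauss q X t)" unfolding P[symmetric] by (simp add: ac_simps)
      finally show ?thesis .
    qed
  qed
  finally show ?thesis unfolding M_def X_def by (simp add: sum_distrib_left)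
qed

lemma LC:
  "(if 0 < a then (\<Sum>t\<le>min (a-1) b. Fm (b-t) (a-1-t) * gauss q (mw + int (a-1) - int b) t) else 0) =
   (\<Sum>t\<le>min a b. (if 0 < a-t then Fm (b-t) (a-t-1) else 0) * gauss q (mw + int a - int b - 1) t)"
proof (cases "a = 0")
  case True then show ?thesis by simp
next
  case False
  have "(\<Sum>t\<le>min (a-1) b. Fm (b-t) (a-1-t) * gauss q (mw + int (a-1) - int b) t)
     = (\<Sum>t\<le>min a b. if t \<le> min (a-1) b then Fm (b-t) (a-1-t) * gauss q (mw + int (a-1) - int b) t else 0)"
    by (rule sum_restrict) auto
  also have "\<dots> = (\<Sum>t\<le>min a b. (if 0 < a-t then Fm (b-t) (a-t-1) else 0) * gauss q (mw + int a - int b - 1) t)"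
    using False by (intro sum.cong refl) (auto simp: of_nat_diff algebra_simps)
  finally show ?thesis using False by simp
qed

lemma LD:
  "(if 0 < b then qpow q (int a + mw - int b + 1) * (\<Sum>t\<le>min a (b-1). Fm (b-1-t) (a-t) * gauss q (mw + int a - int (b-1)) t) else 0) =
   (\<Sum>t\<le>min a b. (if 0 < b-t then qpow q (mw + int (a-t) - int (b-t) + 1) * Fm (b-t-1) (a-t) else 0) * gauss q (mw + int a - int b + 1) t)"
proof (cases "b = 0")
  case True then show ?thesis by simp
next
  case False
  have "qpow q (int a + mw - int b + 1) * (\<Sum>t\<le>min a (b-1). Fm (b-1-t) (a-t) * gauss q (mw + int a - int (b-1)) t)
     = (\<Sum>t\<le>min a (b-1). qpow q (int a + mw - int b + 1) * (Fm (b-1-t) (a-t) * gauss q (mw + int a - int (b-1)) t))"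
    by (simp add: sum_distrib_left)
  also have "\<dots> = (\<Sum>t\<le>min a b. if t \<le> min a (b-1) then qpow q (int a + mw - int b + 1) * (Fm (b-1-t) (a-t) * gauss q (mw + int a - int (b-1)) t) else 0)"
    by (rule sum_restrict) auto
  also have "\<dots> = (\<Sum>t\<le>min a b. (if 0 < b-t then qpow q (mw + int (a-t) - int (b-t) + 1) * Fm (b-t-1) (a-t) else 0) * gauss q (mw + int a - int b + 1) t)"
  proof (intro sum.cong refl)
    fix t assume "t \<in> {..min a b}"
    then have t: "t \<le> a" "t \<le> b" by auto
    have e: "int a + mw - int b + 1 = mw + int (a-t) - int (b-t) + 1" using t by (simp add: of_nat_diff)
    have e2: "mw + int a - int (b-1) = mw + int a - int b + 1" using False by (simp add: of_nat_diff)
    show "(if t \<le> min a (b-1) then qpow q (int a + mw - int b + 1) * (Fm (b-1-t) (a-t) * gauss q (mw + int a - int (b-1)) t) else 0) =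
      (if 0 < b-t then qpow q (mw + int (a-t) - int (b-t) + 1) * Fm (b-t-1) (a-t) else 0) * gauss q (mw + int a - int b + 1) t"
      using t False unfolding e e2 by (auto simp: algebra_simps)
  qed
  finally show ?thesis using False by simp
qed

lemma LB:
  assumes u: "(q::'a::comm_ring_1) dvd 1"
  shows "qpow q (- int a) * (\<Sum>t\<le>min a b. Fm (b-t) (a-t) * gauss q (mw + int a - int b) t) +
    (if 0 < a \<and> 0 < b then qpow q (mw - int b + 1) * (\<Sum>t\<le>min (a-1) (b-1). Fm (b-1-t) (a-1-t) * gauss q (mw + int (a-1) - int (b-1)) t) else 0) =
   (\<Sum>t\<le>min a b. qpow q (- int (a-t)) * Fm (b-t) (a-t) * gauss q (mw + int a - int b + 1) t)"
proof (cases "a = 0 \<or> b = 0")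
  case True
  then have "min a b = 0" by auto
  then show ?thesis using True by auto
next
  case False
  define M where "M = min a b"
  define X where "X = mw + int a - int b"
  have M0: "0 < M" using False by (simp add: M_def)
  have mm: "min (a-1) (b-1) = M - 1" by (simp add: M_def)
  define D where "D t = Fm (b - Suc t) (a - Suc t) * gauss q X t" for t
  have "(\<Sum>t\<le>min (a-1) (b-1). Fm (b-1-t) (a-1-t) * gauss q (mw + int (a-1) - int (b-1)) t)
      = (\<Sum>t\<le>M. if t \<le> M - 1 then D t else 0)"
    unfolding mm using False by (subst sum_restrict[of "M-1" M]) (auto simp: D_def X_def of_nat_diff add_diff_eq intro!: sum.cong)
  also have "\<dots> = (\<Sum>t\<le>M. if t < M then D t else 0)" using M0 by (intro sum.cong refl) auto
  also have "\<dots> = (\<Sum>t\<le>M. if 0 < t then D (t - 1) else 0)" by (rule sum_shift_if)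
  finally have S2: "(\<Sum>t\<le>min (a-1) (b-1). Fm (b-1-t) (a-1-t) * gauss q (mw + int (a-1) - int (b-1)) t) = (\<Sum>t\<le>M. if 0 < t then D (t - 1) else 0)" .
  have "qpow q (- int a) * (\<Sum>t\<le>min a b. Fm (b-t) (a-t) * gauss q (mw + int a - int b) t) +
    qpow q (mw - int b + 1) * (\<Sum>t\<le>M. if 0 < t then D (t - 1) else 0)
    = (\<Sum>t\<le>M. qpow q (- int a) * (Fm (b-t) (a-t) * gauss q X t) + qpow q (mw - int b + 1) * (if 0 < t then D (t - 1) else 0))"
    unfolding M_def X_def by (simp add: sum_distrib_left sum.distrib)
  also have "\<dots> = (\<Sum>t\<le>M. qpow q (- int (a-t)) * Fm (b-t) (a-t) * gauss q (X + 1) t)"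
  proof (rule sum.cong[OF refl])
    fix t assume "t \<in> {..M}"
    then have t: "t \<le> a" "t \<le> b" by (auto simp: M_def)
    show "qpow q (- int a) * (Fm (b-t) (a-t) * gauss q X t) + qpow q (mw - int b + 1) * (if 0 < t then D (t - 1) else 0)
      = qpow q (- int (a-t)) * Fm (b-t) (a-t) * gauss q (X + 1) t"
    proof (cases "t = 0")
      case True then show ?thesis by simp
    next
      case t0: False
      have Dt: "D (t - 1) = Fm (b-t) (a-t) * gauss q X (t-1)" unfolding D_def using t0 by (simp add: Suc_diff_Suc)
      have P: "qpow q (- int (a-t)) * gauss q (X+1) t = qpow q (- int a) * gauss q X t + qpow q (mw - int b + 1) * gauss q X (t-1)"
        using pascal_mul[OF u, of t "- int (a-t)" "X+1"] t0 t unfolding X_def by (simp add: of_nat_diff algebra_simps)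
      have "qpow q (- int a) * (Fm (b-t) (a-t) * gauss q X t) + qpow q (mw - int b + 1) * (if 0 < t then D (t - 1) else 0)
          = (qpow q (- int a) * gauss q X t + qpow q (mw - int b + 1) * gauss q X (t-1)) * Fm (b-t) (a-t)"
        unfolding Dt using t0 by (simp add: algebra_simps)
      also have "\<dots> = qpow q (- int (a-t)) * Fm (b-t) (a-t) * gauss q (X + 1) t"
        unfolding P[symmetric] by (simp add: ac_simps)
      finally show ?thesis .
    qed
  qed
  finally show ?thesis unfolding S2 using False unfolding M_def X_def by simp
qed

lemma EFm_out: "U \<notin> words n m \<or> W \<notin> words n m \<Longrightarrow> EFm q n m i a b U W = 0"
  unfolding EFm_def mat_mult_def rho_E_def rho_F_def by (auto intro!: sum.neutral)
lemma FEm_out: "U \<notin> words n m \<or> W \<notin> words n m \<Longrightarrow> FEm q n m i b a U W = 0"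
  unfolding FEm_def mat_mult_def rho_E_def rho_F_def by (auto intro!: sum.neutral)

lemma EFm_0: "EFm q n 0 i a b [] [] = (if a = 0 \<and> b = 0 then 1 else 0)"
  unfolding EFm_def mat_mult_def words_0 by (simp add: rho_E_0 rho_F_0)
lemma FEm_0: "FEm q n 0 i b a [] [] = (if a = 0 \<and> b = 0 then 1 else 0)"
  unfolding FEm_def mat_mult_def words_0 by (simp add: rho_E_0 rho_F_0)

lemma MI_base:
  "EFm q n 0 i a b U W = (\<Sum>t\<le>min a b. FEm q n 0 i (b-t) (a-t) U W * gauss q (mu i W + int a - int b) t)"
proof (cases "U = [] \<and> W = []")
  case False
  then have "U \<notin> words n 0 \<or> W \<notin> words n 0" by (auto simp: words_0)
  then show ?thesis by (simp add: EFm_out FEm_out)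
next
  case True
  show ?thesis
  proof (cases "a = b")
    case True
    have "(\<Sum>t\<le>min a b. FEm q n 0 i (b-t) (a-t) [] [] * gauss q (mu i [] + int a - int b) t)
        = (\<Sum>t\<le>a. if t = a then gauss q 0 a else 0)"
      using True by (intro sum.cong refl) (auto simp: FEm_0)
    also have "\<dots> = (if a = 0 then 1 else 0)" by (simp add: gauss_zero)
    finally show ?thesis using \<open>U = [] \<and> W = []\<close> True by (simp add: EFm_0)
  next
    case False
    have "(\<Sum>t\<le>min a b. FEm q n 0 i (b-t) (a-t) [] [] * gauss q (mu i [] + int a - int b) t) = 0"
      using False by (intro sum.neutral) (auto simp: FEm_0)
    moreover have "\<not> (a = 0 \<and> b = 0)" using False by auto
    ultimately show ?thesis using \<open>U = [] \<and> W = []\<close> by (simp add: EFm_0)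
  qed
qed

lemma MI:
  assumes u: "(q::'a::comm_ring_1) dvd 1" and i: "1 \<le> i" "i < n"
  shows "EFm q n m i a b U W = (\<Sum>t\<le>min a b. FEm q n m i (b-t) (a-t) U W * gauss q (mu i W + int a - int b) t)"
proof (induction m arbitrary: a b U W)
  case 0 show ?case by (rule MI_base)
next
  case (Suc m)
  show ?case
  proof (cases "U \<in> words n (Suc m) \<and> W \<in> words n (Suc m)")
    case False then show ?thesis by (simp add: EFm_out FEm_out)
  next
    case True
    then obtain u x w y where U: "U = u@[x]" "u \<in> words n m" "x \<in> {1..n}" and W: "W = w@[y]" "w \<in> words n m" "y \<in> {1..n}"
      by (metis words_Suc_cases)
    note EP = EF_peel[OF u i U(2) W(2) U(3) W(3)]
    note FP = FE_peel[OF u i U(2) W(2) U(3) W(3)]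
    define Fm where "Fm b' a' = FEm q n m i b' a' u w" for b' a'
    have IH: "EFm q n m i a' b' u w = (\<Sum>t\<le>min a' b'. Fm (b'-t) (a'-t) * gauss q (mu i w + int a' - int b') t)" for a' b'
      using Suc.IH unfolding Fm_def by simp
    have ne: "i + 1 \<noteq> i" by simp
    consider "y = i" | "y = i+1" | "y \<noteq> i" "y \<noteq> i+1" by blast
    then show ?thesis
    proof cases
      case 1
      have top: "mu i W + int a - int b = mu i w + int a - int b + 1" unfolding W 1 by (simp add: sg_def)
      consider "x = i" | "x = i+1" | "x \<noteq> i" "x \<noteq> i+1" by blast
      then show ?thesis
      proof cases
        case x: 1
        have "EFm q n (Suc m) i a b U W = qpow q (- int a) * (\<Sum>t\<le>min a b. Fm (b-t) (a-t) * gauss q (mu i w + int a - int b) t) +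
          (if 0 < a \<and> 0 < b then qpow q (mu i w - int b + 1) * (\<Sum>t\<le>min (a-1) (b-1). Fm (b-1-t) (a-1-t) * gauss q (mu i w + int (a-1) - int (b-1)) t) else 0)"
          unfolding U W EP unfolding 1 x by (simp add: IH)
        also have "\<dots> = (\<Sum>t\<le>min a b. qpow q (- int (a-t)) * Fm (b-t) (a-t) * gauss q (mu i w + int a - int b + 1) t)"
          by (rule LB[OF u])
        also have "\<dots> = (\<Sum>t\<le>min a b. FEm q n (Suc m) i (b-t) (a-t) U W * gauss q (mu i W + int a - int b) t)"
          unfolding top unfolding U W FP by (intro sum.cong refl) (simp add: 1 x Fm_def)
        finally show ?thesis .
      next
        case x: 2
        have "EFm q n (Suc m) i a b U W = (if 0 < b then qpow q (int a + mu i w - int b + 1) * (\<Sum>t\<le>min a (b-1). Fm (b-1-t) (a-t) * gauss q (mu i w + int a - int (b-1)) t) else 0)"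
          unfolding U W EP unfolding 1 x using ne by (simp add: IH)
        also have "\<dots> = (\<Sum>t\<le>min a b. (if 0 < b-t then qpow q (mu i w + int (a-t) - int (b-t) + 1) * Fm (b-t-1) (a-t) else 0) * gauss q (mu i w + int a - int b + 1) t)"
          by (rule LD)
        also have "\<dots> = (\<Sum>t\<le>min a b. FEm q n (Suc m) i (b-t) (a-t) U W * gauss q (mu i W + int a - int b) t)"
          unfolding top unfolding U W FP using ne by (intro sum.cong refl) (simp add: 1 x Fm_def)
        finally show ?thesis .
      next
        case x: 3
        have "EFm q n (Suc m) i a b U W = 0" unfolding U W EP unfolding 1 using x by simp
        moreover have "(\<Sum>t\<le>min a b. FEm q n (Suc m) i (b-t) (a-t) U W * gauss q (mu i W + int a - int b) t) = 0"
          unfolding U W FP using x by (intro sum.neutral) (simp add: 1)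
        ultimately show ?thesis by simp
      qed
    next
      case 2
      have top: "mu i W + int a - int b = mu i w + int a - int b - 1" unfolding W 2 by (simp add: sg_def)
      consider "x = i" | "x = i+1" | "x \<noteq> i" "x \<noteq> i+1" by blast
      then show ?thesis
      proof cases
        case x: 1
        have "EFm q n (Suc m) i a b U W = (if 0 < a then (\<Sum>t\<le>min (a-1) b. Fm (b-t) (a-1-t) * gauss q (mu i w + int (a-1) - int b) t) else 0)"
          unfolding U W EP unfolding 2 x using ne by (simp add: IH)
        also have "\<dots> = (\<Sum>t\<le>min a b. (if 0 < a-t then Fm (b-t) (a-t-1) else 0) * gauss q (mu i w + int a - int b - 1) t)"
          by (rule LC)
        also have "\<dots> = (\<Sum>t\<le>min a b. FEm q n (Suc m) i (b-t) (a-t) U W * gauss q (mu i W + int a - int b) t)"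
          unfolding top unfolding U W FP using ne by (intro sum.cong refl) (simp add: 2 x Fm_def)
        finally show ?thesis .
      next
        case x: 2
        have "EFm q n (Suc m) i a b U W = qpow q (int a) * (\<Sum>t\<le>min a b. Fm (b-t) (a-t) * gauss q (mu i w + int a - int b) t)"
          unfolding U W EP unfolding 2 x using ne by (simp add: IH)
        also have "\<dots> = (\<Sum>t\<le>min a b. (qpow q (int (a-t)) * Fm (b-t) (a-t) + (if 0 < a-t \<and> 0 < b-t then qpow q (mu i w + 2*int(a-t) - int(b-t) - 1) * Fm (b-t-1) (a-t-1) else 0)) * gauss q (mu i w + int a - int b - 1) t)"
          by (rule LA[OF u])
        also have "\<dots> = (\<Sum>t\<le>min a b. FEm q n (Suc m) i (b-t) (a-t) U W * gauss q (mu i W + int a - int b) t)"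
          unfolding top unfolding U W FP using ne by (intro sum.cong refl) (simp add: 2 x Fm_def)
        finally show ?thesis .
      next
        case x: 3
        have "EFm q n (Suc m) i a b U W = 0" unfolding U W EP unfolding 2 using x ne by simp
        moreover have "(\<Sum>t\<le>min a b. FEm q n (Suc m) i (b-t) (a-t) U W * gauss q (mu i W + int a - int b) t) = 0"
          unfolding U W FP using x ne by (intro sum.neutral) (simp add: 2)
        ultimately show ?thesis by simp
      qed
    next
      case 3
      have top: "mu i W + int a - int b = mu i w + int a - int b" unfolding W using 3 by (simp add: sg_def)
      have "EFm q n (Suc m) i a b U W = (if x = y then EFm q n m i a b u w else 0)" unfolding U W EP using 3 by simp
      also have "\<dots> = (\<Sum>t\<le>min a b. FEm q n (Suc m) i (b-t) (a-t) U W * gauss q (mu i W + int a - int b) t)"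
        unfolding top IH unfolding U W FP using 3 by (auto simp: Fm_def intro!: sum.cong)
      finally show ?thesis .
    qed
  qed
qed

definition Dg :: "nat \<Rightarrow> nat \<Rightarrow> (nat list \<Rightarrow> 'a::comm_ring_1) \<Rightarrow> 'a mat" where
  "Dg n m f = (\<lambda>u w. if w \<in> words n m \<and> u = w then f w else 0)"

lemma subalg_zero: "(\<lambda>u w. 0) \<in> subalg n m G"
proof -
  have "(\<lambda>u w. 0 * mat_one n m u w) \<in> subalg n m G" by (rule subalg.smult[OF subalg.one])
  then show ?thesis by simp
qed

lemma subalg_sum: "finite J \<Longrightarrow> (\<And>j. j \<in> J \<Longrightarrow> X j \<in> subalg n m G) \<Longrightarrow> (\<lambda>u w. \<Sum>j\<in>J. X j u w) \<in> subalg n m G"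
proof (induction J rule: finite_induct)
  case empty then show ?case by (simp add: subalg_zero)
next
  case (insert j J)
  have "(\<lambda>u w. X j u w + (\<Sum>j\<in>J. X j u w)) \<in> subalg n m G"
    using insert by (intro subalg.add) auto
  then show ?case using insert by simp
qed

lemma subalg_lin: "A \<in> subalg n m G \<Longrightarrow> B \<in> subalg n m G \<Longrightarrow> (\<lambda>u w. r * A u w + s * B u w) \<in> subalg n m G"
  by (intro subalg.add subalg.smult)

lemma Dg_one: "Dg n m (\<lambda>w. 1) = mat_one n m"
  by (auto simp: Dg_def mat_one_def fun_eq_iff)

lemma Dg_lin: "Dg n m f \<in> subalg n m G \<Longrightarrow> Dg n m g \<in> subalg n m G \<Longrightarrow> Dg n m (\<lambda>w. r * f w + s * g w) \<in> subalg n m G"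
proof -
  assume a: "Dg n m f \<in> subalg n m G" "Dg n m g \<in> subalg n m G"
  have "Dg n m (\<lambda>w. r * f w + s * g w) = (\<lambda>u w. r * Dg n m f u w + s * Dg n m g u w)"
    by (auto simp: Dg_def fun_eq_iff)
  then show ?thesis using subalg_lin[OF a] by simp
qed

lemma Dg_smult: "Dg n m f \<in> subalg n m G \<Longrightarrow> Dg n m (\<lambda>w. r * f w) \<in> subalg n m G"
proof -
  assume a: "Dg n m f \<in> subalg n m G"
  have "Dg n m (\<lambda>w. r * f w) = (\<lambda>u w. r * Dg n m f u w)"
    by (auto simp: Dg_def fun_eq_iff)
  then show ?thesis using subalg.smult[OF a] by simp
qed

lemma mat_mult_Dg_right: "mat_mult n m B (Dg n m f) u w = (if w \<in> words n m then B u w * f w else 0)"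
proof -
  have "mat_mult n m B (Dg n m f) u w = (\<Sum>v\<in>words n m. if v = w then B u w * f w else 0)"
    unfolding mat_mult_def Dg_def by (rule sum.cong) auto
  then show ?thesis by (simp add: finite_words)
qed

lemma mat_mult_Dg_left: "mat_mult n m (Dg n m f) B u w = (if u \<in> words n m then f u * B u w else 0)"
proof -
  have "mat_mult n m (Dg n m f) B u w = (\<Sum>v\<in>words n m. if u = v then f u * B u w else 0)"
    unfolding mat_mult_def Dg_def by (rule sum.cong) auto
  then show ?thesis by (simp add: finite_words)
qed

lemma Dg_mult: "mat_mult n m (Dg n m f) (Dg n m g) = Dg n m (\<lambda>w. f w * g w)"
  by (auto simp: fun_eq_iff mat_mult_Dg_left) (auto simp: Dg_def)

lemma Dg_mult_mem: "Dg n m f \<in> subalg n m G \<Longrightarrow> Dg n m g \<in> subalg n m G \<Longrightarrow> Dg n m (\<lambda>w. f w * g w) \<in> subalg n m G"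
  using subalg.mult[of "Dg n m f" n m G "Dg n m g"] Dg_mult by metis

lemma Dg_prod_mem: "finite J \<Longrightarrow> (\<And>j. j \<in> J \<Longrightarrow> Dg n m (f j) \<in> subalg n m G) \<Longrightarrow> Dg n m (\<lambda>w. \<Prod>j\<in>J. f j w) \<in> subalg n m G"
proof (induction J rule: finite_induct)
  case empty then show ?case by (simp add: Dg_one subalg.one)
next
  case (insert j J)
  have "Dg n m (\<lambda>w. f j w * (\<Prod>j\<in>J. f j w)) \<in> subalg n m G"
    using insert by (intro Dg_mult_mem) auto
  then show ?case using insert by simp
qed

lemma Dg_cong: "(\<And>w. w \<in> words n m \<Longrightarrow> f w = g w) \<Longrightarrow> Dg n m f = Dg n m g"
  by (auto simp: Dg_def fun_eq_iff)

lemma rho_E_zero: "rho_E q n m i 0 = mat_one n m"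
proof (intro ext)
  fix u w
  show "rho_E q n m i 0 u w = mat_one n m u w"
  proof (cases "u \<in> words n m \<and> w \<in> words n m")
    case True
    then have l: "length u = m" "length w = m" by (auto simp: words_def)
    have "(card {k. k < m \<and> u ! k \<noteq> w ! k} = 0) = (u = w)"
      using l by (auto simp: list_eq_iff_nth_eq)
    then show ?thesis unfolding rho_E_def mat_one_def using True by auto
  next
    case False then show ?thesis unfolding rho_E_def mat_one_def by auto
  qed
qed

lemma rho_F_zero: "rho_F q n m i 0 = mat_one n m"
proof (intro ext)
  fix u w
  show "rho_F q n m i 0 u w = mat_one n m u w"
  proof (cases "u \<in> words n m \<and> w \<in> words n m")
    case True
    then have l: "length u = m" "length w = m" by (auto simp: words_def)
    have "(card {k. k < m \<and> u ! k \<noteq> w ! k} = 0) = (u = w)"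
      using l by (auto simp: list_eq_iff_nth_eq)
    then show ?thesis unfolding rho_F_def mat_one_def using True by auto
  next
    case False then show ?thesis unfolding rho_F_def mat_one_def by auto
  qed
qed

lemma prod_qpow_list: assumes u: "(q::'a::comm_ring_1) dvd 1"
  shows "(\<Prod>k<length w. qpow q (f (w!k))) = qpow q (sum_list (map f w))"
proof (induction w rule: rev_induct)
  case Nil then show ?case by simp
next
  case (snoc x w)
  have "(\<Prod>k<length (w@[x]). qpow q (f ((w@[x])!k))) = (\<Prod>k<length w. qpow q (f ((w@[x])!k))) * qpow q (f x)"
    by (simp add: nth_append)
  also have "(\<Prod>k<length w. qpow q (f ((w@[x])!k))) = (\<Prod>k<length w. qpow q (f (w!k)))"
    by (intro prod.cong refl) (simp add: nth_append)
  finally show ?case using snoc by (simp add: qpow_add[OF u])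
qed

lemma hK_sg: "hK i = sg i" by (auto simp: hK_def sg_def fun_eq_iff)

lemma K_Dg: assumes u: "(q::'a::comm_ring_1) dvd 1"
  shows "rho_qh q n m (hK i) = Dg n m (\<lambda>w. qpow q (mu i w))"
proof -
  have "(\<Prod>k<m. qpow q (hK i (w!k))) = qpow q (mu i w)" if "w \<in> words n m" for w
    using prod_qpow_list[OF u, of "hK i" w] that by (simp add: words_def mu_def hK_sg)
  then show ?thesis by (auto simp: rho_qh_def Dg_def fun_eq_iff)
qed

definition Dm where "Dm q n m i t c = Dg n m (\<lambda>w. gauss q (mu i w + c) t)"

context
  fixes q :: "'a::comm_ring_1" and n m i :: nat
  assumes u: "q dvd 1" and i: "1 \<le> i" "i < n"
begin

abbreviation "AA \<equiv> subalg n m (gens_U' q n m)"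

lemma E_mem: "rho_E q n m i l \<in> AA"
  using i by (intro subalg.gen) (auto simp: gens_U'_def gens_EF_def)
lemma F_mem: "rho_F q n m i l \<in> AA"
  using i by (intro subalg.gen) (auto simp: gens_U'_def gens_EF_def)
lemma FEm_mem: "FEm q n m i b a \<in> AA"
  unfolding FEm_def by (intro subalg.mult E_mem F_mem)
lemma EFm_mem: "EFm q n m i a b \<in> AA"
  unfolding EFm_def by (intro subalg.mult E_mem F_mem)
lemma K_mem: "Dg n m (\<lambda>w. qpow q (mu i w)) \<in> AA"
proof -
  have "rho_qh q n m (hK i) \<in> AA" using i by (intro subalg.gen) (auto simp: gens_U'_def)
  then show ?thesis using K_Dg[OF u] by simp
qed

lemma D0_mem: "Dm q n m i t 0 \<in> AA"
proof (induction t rule: less_induct)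
  case (less t)
  define X where "X s = mat_mult n m (FEm q n m i (t-s) (t-s)) (Dm q n m i s 0)" for s
  have Xm: "X s \<in> AA" if "s < t" for s unfolding X_def using less that by (intro subalg.mult FEm_mem) auto
  have eq: "Dm q n m i t 0 = (\<lambda>u w. EFm q n m i t t u w + (\<Sum>s\<in>{..<t}. (-1) * X s u w))"
  proof (intro ext)
    fix u w
    show "Dm q n m i t 0 u w = EFm q n m i t t u w + (\<Sum>s\<in>{..<t}. (-1) * X s u w)"
    proof (cases "w \<in> words n m")
      case False
      have "X s u w = 0" for s unfolding X_def Dm_def mat_mult_Dg_right using False by simp
      then show ?thesis using False by (simp add: Dm_def Dg_def EFm_out)
    next
      case True
      have Xs: "X s u w = FEm q n m i (t-s) (t-s) u w * gauss q (mu i w + 0) s" for s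
        unfolding X_def Dm_def mat_mult_Dg_right using True by simp
      have FE0: "FEm q n m i 0 0 = mat_one n m"
        unfolding FEm_def rho_E_zero rho_F_zero Dg_one[symmetric] Dg_mult by simp
      have "EFm q n m i t t u w = (\<Sum>s\<le>t. FEm q n m i (t-s) (t-s) u w * gauss q (mu i w + 0) s)"
        using MI[OF u i, of m t t u w] by simp
      also have "\<dots> = (\<Sum>s<t. X s u w) + mat_one n m u w * gauss q (mu i w) t"
        unfolding Xs by (simp add: lessThan_Suc_atMost[symmetric] FE0)
      finally show ?thesis using True by (simp add: Dm_def Dg_def mat_one_def sum_negf)
    qed
  qed
  show ?case unfolding eq by (intro subalg.add EFm_mem subalg_sum subalg.smult Xm) auto
qed

lemma Dm_mem: "Dm q n m i t c \<in> AA"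
proof (induction t arbitrary: c)
  case 0
  have "Dm q n m i 0 c = mat_one n m" unfolding Dm_def Dg_one[symmetric] by simp
  then show ?case by (simp add: subalg.one)
next
  case (Suc k)
  have KD: "Dg n m (\<lambda>w. qpow q (mu i w) * gauss q (mu i w + c) k) \<in> AA" for c
    using Dg_mult_mem[OF K_mem Suc.IH[of c, unfolded Dm_def]] .
  show ?case
  proof (induction c rule: int_induct[where k=0])
    case base then show ?case by (rule D0_mem)
  next
    case (step1 c)
    have "Dm q n m i (Suc k) (c+1) = Dg n m (\<lambda>w. qpow q (- int (Suc k)) * gauss q (mu i w + c) (Suc k) + qpow q (c + 1 - int (Suc k)) * (qpow q (mu i w) * gauss q (mu i w + c) k))"
      unfolding Dm_def
    proof (rule Dg_cong)
      fix w
      have "gauss q (mu i w + (c+1)) (Suc k) = qpow q (- int (Suc k)) * gauss q (mu i w + c) (Suc k) + qpow q (mu i w + (c+1) - int (Suc k)) * gauss q (mu i w + c) k"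
        using gauss_pascal[OF u, of "mu i w + (c+1)" k] by simp
      also have "qpow q (mu i w + (c+1) - int (Suc k)) = qpow q (c + 1 - int (Suc k)) * qpow q (mu i w)"
        by (simp add: qcomb[OF u], rule qeq, simp)
      finally show "gauss q (mu i w + (c+1)) (Suc k) = qpow q (- int (Suc k)) * gauss q (mu i w + c) (Suc k) + qpow q (c + 1 - int (Suc k)) * (qpow q (mu i w) * gauss q (mu i w + c) k)"
        by (simp add: ac_simps)
    qed
    then show ?case using Dg_lin[OF step1(2)[unfolded Dm_def] KD[of c]] by simp
  next
    case (step2 c)
    have eqD: "Dm q n m i (Suc k) (c-1) = Dg n m (\<lambda>w. qpow q (int (Suc k)) * gauss q (mu i w + c) (Suc k) + (- qpow q c) * (qpow q (mu i w) * gauss q (mu i w + (c-1)) k))"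
      unfolding Dm_def
    proof (rule Dg_cong)
      fix w
      have P: "gauss q (mu i w + c) (Suc k) = qpow q (- int (Suc k)) * gauss q (mu i w + (c-1)) (Suc k) + qpow q (mu i w + c - int (Suc k)) * gauss q (mu i w + (c-1)) k"
        using gauss_pascal[OF u, of "mu i w + c" k] by (simp add: algebra_simps)
      have a: "qpow q (int (Suc k)) * qpow q (- int (Suc k)) = 1" unfolding qcomb[OF u] by simp
      have b: "qpow q (int (Suc k)) * qpow q (mu i w + c - int (Suc k)) = qpow q c * qpow q (mu i w)"
        by (simp add: qcomb[OF u], rule qeq, simp)
      have "qpow q (int (Suc k)) * gauss q (mu i w + c) (Suc k) = gauss q (mu i w + (c-1)) (Suc k) + qpow q c * qpow q (mu i w) * gauss q (mu i w + (c-1)) k"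
        unfolding P distrib_left mult.assoc[symmetric] a b by simp
      then show "gauss q (mu i w + (c-1)) (Suc k) = qpow q (int (Suc k)) * gauss q (mu i w + c) (Suc k) + (- qpow q c) * (qpow q (mu i w) * gauss q (mu i w + (c-1)) k)"
        by (simp add: algebra_simps)
    qed
    show ?case unfolding eqD by (rule Dg_lin[OF step2(2)[unfolded Dm_def] KD[of "c-1"]])
  qed
qed

end

definition cnt :: "nat \<Rightarrow> nat list \<Rightarrow> nat" where "cnt j w = length (filter (\<lambda>x. x = j) w)"

lemma cnt_simps[simp]: "cnt j [] = 0" "cnt j (x # w) = (if x = j then Suc (cnt j w) else cnt j w)"
  by (simp_all add: cnt_def)

lemma mu_cnt: "mu i w = int (cnt i w) - int (cnt (i+1) w)"
  by (induction w) (auto simp: mu_def sg_def)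

lemma sum_cnt: "set w \<subseteq> {1..n} \<Longrightarrow> (\<Sum>j\<in>{1..n}. cnt j w) = length w"
proof (induction w)
  case Nil then show ?case by simp
next
  case (Cons x w)
  have "(\<Sum>j\<in>{1..n}. cnt j (x # w)) = (\<Sum>j\<in>{1..n}. cnt j w + (if j = x then 1 else 0))"
    by (intro sum.cong) auto
  also have "\<dots> = (\<Sum>j\<in>{1..n}. cnt j w) + 1" using Cons.prems by (simp add: sum.distrib)
  finally show ?case using Cons by simp
qed

lemma sum_list_cnt: "set w \<subseteq> {1..n} \<Longrightarrow> sum_list (map h w) = (\<Sum>j\<in>{1..n}. h j * int (cnt j w))"
proof (induction w)
  case Nil then show ?case by simp
next
  case (Cons x w)
  have "(\<Sum>j\<in>{1..n}. h j * int (cnt j (x # w))) = (\<Sum>j\<in>{1..n}. h j * int (cnt j w) + (if j = x then h x else 0))"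
    by (intro sum.cong) (auto simp: algebra_simps)
  also have "\<dots> = (\<Sum>j\<in>{1..n}. h j * int (cnt j w)) + h x" using Cons.prems by (simp add: sum.distrib)
  finally show ?case using Cons by simp
qed

lemma cnt_eq:
  assumes n: "1 \<le> n" and vw: "v \<in> words n m" "w \<in> words n m"
    and mu: "\<And>i. 1 \<le> i \<Longrightarrow> i < n \<Longrightarrow> mu i v = mu i w"
  shows "j \<in> {1..n} \<Longrightarrow> cnt j v = cnt j w"
proof -
  define f where "f j = int (cnt j v) - int (cnt j w)" for j
  have step: "f (j+1) = f j" if "1 \<le> j" "j < n" for j
    using mu[OF that] unfolding mu_cnt f_def by simp
  have const: "f j = f 1" if "j \<in> {1..n}" for j
    using that
  proof (induction j)
    case 0 then show ?case by simp
  next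
    case (Suc j)
    show ?case
    proof (cases "j = 0")
      case True then show ?thesis by simp
    next
      case False
      then have "f (Suc j) = f j" using step[of j] Suc.prems by simp
      then show ?thesis using Suc False by simp
    qed
  qed
  have sv: "(\<Sum>j\<in>{1..n}. cnt j v) = m" "(\<Sum>j\<in>{1..n}. cnt j w) = m"
    using sum_cnt[of v n] sum_cnt[of w n] vw by (auto simp: words_def)
  have "(\<Sum>j\<in>{1..n}. f j) = 0" unfolding f_def sum_subtractf using sv by (simp flip: of_nat_sum)
  moreover have "(\<Sum>j\<in>{1..n}. f j) = (\<Sum>j\<in>{1..n}. f 1)" by (rule sum.cong[OF refl const])
  moreover have "(\<Sum>j\<in>{1..n}. f 1) = int n * f 1" by simp
  ultimately have "f 1 = 0" using n by simp
  then show "j \<in> {1..n} \<Longrightarrow> cnt j v = cnt j w" using const[of j] unfolding f_def by simp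
qed

lemma val_eq:
  assumes u: "(q::'a::comm_ring_1) dvd 1" and n: "1 \<le> n" and vw: "v \<in> words n m" "w \<in> words n m"
    and mu: "\<And>i. 1 \<le> i \<Longrightarrow> i < n \<Longrightarrow> mu i v = mu i w"
  shows "(\<Prod>k<m. qpow q (h (v!k))) = (\<Prod>k<m. qpow q (h (w!k)))"
proof -
  have l: "length v = m" "length w = m" "set v \<subseteq> {1..n}" "set w \<subseteq> {1..n}" using vw by (auto simp: words_def)
  have "sum_list (map h v) = sum_list (map h w)"
    using sum_list_cnt[OF l(3), of h] sum_list_cnt[OF l(4), of h] cnt_eq[OF n vw mu] by simp
  then show ?thesis using prod_qpow_list[OF u, of h v] prod_qpow_list[OF u, of h w] l by simp
qed

lemma mu_bound: "w \<in> words n m \<Longrightarrow> - int m \<le> mu i w \<and> mu i w \<le> int m"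
proof -
  have "\<bar>mu i w\<bar> \<le> int (length w)" by (induction w) (auto simp: mu_def sg_def)
  then show "w \<in> words n m \<Longrightarrow> - int m \<le> mu i w \<and> mu i w \<le> int m" by (auto simp: words_def)
qed

definition sep :: "'a::comm_ring_1 \<Rightarrow> int \<Rightarrow> int \<Rightarrow> int \<Rightarrow> 'a" where
  "sep q d d' x = (if d' < d then gauss q (x - d') (nat (d - d')) else (-1) ^ nat (d' - d) * gauss q (x - d - 1) (nat (d' - d)))"

lemma sep_d: "sep q d d' d = 1"
proof (cases "d' < d")
  case True
  then have "d - d' = int (nat (d - d'))" by simp
  then show ?thesis using True gauss_diag[of q "nat (d - d')"] by (simp add: sep_def)
next
  case False then show ?thesis by (simp add: sep_def gauss_m1 power_mult_distrib[symmetric])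
qed

lemma sep_d': "d \<noteq> d' \<Longrightarrow> sep q d d' d' = 0"
  by (auto simp: sep_def gauss_zero)

lemma Pi_mem:
  assumes u: "(q::'a::comm_ring_1) dvd 1" and i: "1 \<le> i" "i < n"
  shows "Dg n m (\<lambda>w. if mu i w = d then 1 else 0) \<in> subalg n m (gens_U' q n m)"
proof -
  have S: "Dg n m (\<lambda>w. sep q d d' (mu i w)) \<in> subalg n m (gens_U' q n m)" for d'
  proof (cases "d' < d")
    case True
    have "Dg n m (\<lambda>w. sep q d d' (mu i w)) = Dm q n m i (nat (d - d')) (- d')"
      unfolding Dm_def sep_def using True by simp
    then show ?thesis using Dm_mem[OF u i] by simp
  next
    case False
    have "Dg n m (\<lambda>w. sep q d d' (mu i w)) = Dg n m (\<lambda>w. (-1) ^ nat (d' - d) * gauss q (mu i w + (- d - 1)) (nat (d' - d)))"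
      unfolding sep_def using False by (simp add: algebra_simps)
    then show ?thesis using Dg_smult[OF Dm_mem[OF u i, unfolded Dm_def]] by simp
  qed
  have P: "Dg n m (\<lambda>w. \<Prod>d'\<in>{- int m..int m} - {d}. sep q d d' (mu i w)) \<in> subalg n m (gens_U' q n m)"
    by (rule Dg_prod_mem) (auto intro: S)
  have "Dg n m (\<lambda>w. \<Prod>d'\<in>{- int m..int m} - {d}. sep q d d' (mu i w)) = Dg n m (\<lambda>w. if mu i w = d then 1 else 0)"
  proof (rule Dg_cong)
    fix w assume w: "w \<in> words n m"
    show "(\<Prod>d'\<in>{- int m..int m} - {d}. sep q d d' (mu i w)) = (if mu i w = d then 1 else 0)"
    proof (cases "mu i w = d")
      case True then show ?thesis by (simp add: sep_d)
    next
      case False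
      have "mu i w \<in> {- int m..int m} - {d}" using mu_bound[OF w, of i] False by auto
      then have "(\<Prod>d'\<in>{- int m..int m} - {d}. sep q d d' (mu i w)) = 0"
        using False by (intro prod_zero) (auto intro!: bexI[of _ "mu i w"] simp: sep_d')
      then show ?thesis using False by simp
    qed
  qed
  then show ?thesis using P by simp
qed

lemma prod_ind: "finite I \<Longrightarrow> (\<Prod>i\<in>I. if P i then (1::'a::comm_ring_1) else 0) = (if \<forall>i\<in>I. P i then 1 else 0)"
  by (induction I rule: finite_induct) auto

lemma subalg_mono: "G \<subseteq> subalg n m H \<Longrightarrow> subalg n m G \<subseteq> subalg n m H"
proof
  fix A assume G: "G \<subseteq> subalg n m H" and "A \<in> subalg n m G"
  from \<open>A \<in> subalg n m G\<close> show "A \<in> subalg n m H"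
    by (induction rule: subalg.induct) (use G in \<open>auto intro: subalg.intros\<close>)
qed

lemma qh_mem:
  assumes u: "(q::'a::comm_ring_1) dvd 1" and n: "1 \<le> n"
  shows "rho_qh q n m h \<in> subalg n m (gens_U' q n m)"
proof -
  define key where "key w = map (\<lambda>i. mu i w) [1..<n]" for w
  define T where "T = key ` words n m"
  define rep where "rep \<tau> = (SOME w. w \<in> words n m \<and> key w = \<tau>)" for \<tau>
  define val where "val w = (\<Prod>k<m. qpow q (h (w!k)))" for w
  have rep: "rep \<tau> \<in> words n m \<and> key (rep \<tau>) = \<tau>" if "\<tau> \<in> T" for \<tau>
  proof -
    have "\<exists>w. w \<in> words n m \<and> key w = \<tau>" using that by (auto simp: T_def)
    then show ?thesis unfolding rep_def by (rule someI_ex)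
  qed
  have keq: "key v = key w \<longleftrightarrow> (\<forall>i\<in>{1..<n}. mu i v = mu i w)" for v w
    unfolding key_def by (auto simp: map_eq_conv)
  have Pm: "Dg n m (\<lambda>w. if key w = \<tau> then 1 else 0) \<in> subalg n m (gens_U' q n m)" if tT: "\<tau> \<in> T" for \<tau>
  proof -
    obtain v where v: "\<tau> = key v" using tT unfolding T_def by blast
    have "Dg n m (\<lambda>w. \<Prod>i\<in>{1..<n}. if mu i w = mu i v then 1 else 0) \<in> subalg n m (gens_U' q n m)"
      by (rule Dg_prod_mem) (auto intro: Pi_mem[OF u])
    moreover have "(\<lambda>w. \<Prod>i\<in>{1..<n}. if mu i w = mu i v then 1 else 0) = (\<lambda>w. if key w = \<tau> then 1 else (0::'a))"
      unfolding v by (auto simp: prod_ind keq fun_eq_iff)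
    ultimately show ?thesis by simp
  qed
  have fT: "finite T" unfolding T_def by (simp add: finite_words)
  have eq: "rho_qh q n m h = (\<lambda>u w. \<Sum>\<tau>\<in>T. val (rep \<tau>) * Dg n m (\<lambda>w. if key w = \<tau> then 1 else 0) u w)"
  proof (intro ext)
    fix u w
    show "rho_qh q n m h u w = (\<Sum>\<tau>\<in>T. val (rep \<tau>) * Dg n m (\<lambda>w. if key w = \<tau> then 1 else 0) u w)"
    proof (cases "w \<in> words n m \<and> u = w")
      case True
      then have wT: "key w \<in> T" by (auto simp: T_def)
      have "(\<Sum>\<tau>\<in>T. val (rep \<tau>) * Dg n m (\<lambda>w. if key w = \<tau> then 1 else 0) u w) = (\<Sum>\<tau>\<in>T. if \<tau> = key w then val (rep \<tau>) else 0)"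
        using True by (intro sum.cong) (auto simp: Dg_def)
      also have "\<dots> = val (rep (key w))" using fT wT by simp
      also have "\<dots> = val w" unfolding val_def
        using val_eq[OF u n, of "rep (key w)" m w h] rep[OF wT] True keq by auto
      finally show ?thesis using True by (simp add: rho_qh_def val_def)
    next
      case False then show ?thesis by (auto simp: rho_qh_def Dg_def)
    qed
  qed
  show ?thesis unfolding eq by (intro subalg_sum fT subalg.smult Pm)
qed

theorem theorem2p1:
  fixes q :: "'a::comm_ring_1" and n m :: nat
  assumes "1 \<le> n" and "q dvd 1"
  shows "rho_U q n m = rho_U' q n m"
proof
  show "rho_U' q n m \<subseteq> rho_U q n m" unfolding rho_U_def rho_U'_def
    by (rule subalg_mono) (auto simp: gens_U_def gens_U'_def intro: subalg.gen)
  show "rho_U q n m \<subseteq> rho_U' q n m" unfolding rho_U_def rho_U'_def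
  proof (rule subalg_mono, rule subsetI)
    fix A assume "A \<in> gens_U q n m"
    then consider h where "A = rho_qh q n m h" | "A \<in> gens_EF q n m" by (auto simp: gens_U_def)
    then show "A \<in> subalg n m (gens_U' q n m)"
    proof cases
      case 1 then show ?thesis using qh_mem[OF assms(2,1)] by simp
    next
      case 2 then show ?thesis by (intro subalg.gen) (simp add: gens_U'_def)
    qed
  qed
qed


end
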